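(* (i) Let $F$ be a graph fibration. Then $$\mathscr{C}_F:=\{(K,\mathbf{a},\mathbf{b})\mid (K,g_{\mathbf{a}}^{-1}g_{\mathbf{b}})\in F\}=\{(K,\mathbf{a},\mathbf{b})\mid (K,g_{\mathbf{b}}g_{\mathbf{a}}^{-1})\in F\}$$ is a skew graph category. (ii) Conversely, let $\mathscr{C}$ be a skew graph category. Then $$F_{\mathscr{C}}:=\{(K,g_{\mathbf{a}}^{-1}g_{\mathbf{b}})\mid (K,\mathbf{a},\mathbf{b})\in\mathscr{C}\}=\{(K,g_{\mathbf{b}}g_{\mathbf{a}}^{-1})\mid (K,\mathbf{a},\mathbf{b})\in\mathscr{C}\}=\{(K,g_{\mathbf{a}})\mid (K,\emptyset,\mathbf{a})\in\mathscr{C}\}$$ is a graph fibration. (iii) The assignments $F\mapsto\mathscr{C}_F$ and $\mathscr{C}\mapsto F_{\mathscr{C}}$ are mutually inverse, so they give a one-to-one correspondence between graph fibrations and skew graph categories. Under this correspondence, a graph fibration $F$ is easy if and only if $\mathscr{C}_F$ is a group-theoretical graph category.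
   Context: Graphs are finite, undirected, without multiple edges, loops allowed, considered up to isomorphism; $N_k$ is the edgeless graph on $k$ vertices ($N_0$ the empty graph). For a set $V$, $\mathbb{Z}_2^{*V}$ is the group generated by the elements of $V$ subject to $v^2=e$ for all $v\in V$. For a word (tuple) $\mathbf{a}=(a_1,\dots,a_k)$ over $V$, $g_{\mathbf{a}}:=a_1a_2\cdots a_k\in\mathbb{Z}_2^{*V}$; $\mathbf{a}^*$ is the reversed word. A map $\phi\colon V\to V'$ induces maps on words and a homomorphism $\mathbb{Z}_2^{*V}\to\mathbb{Z}_2^{*V'}$, all denoted $\phi$. Quotients: for a partition $\pi$ of $V(K)$, $K/\pi$ has the blocks of $\pi$ as vertices, with an edge between two (possibly equal) blocks iff $K$ has an edge between some of their elements; $q_\pi\colon V(K)\to V(K/\pi)$ is the quotient map. A vertex overlap of graphs $K,H$ is an injective partial function $f$ from $V(K)$ to $V(H)$, i.e. a subset $f\subset V(K)\times V(H)$ in which each vertex occurs at most once; $K\cup_f H$ is the quotient of the disjoint union $K\sqcup H$ identifying $v$ with $w$ for all $(v,w)\in f$; $f_K,f_H$ denote the induced maps of $V(K),V(H)$ into $V(K\cup_fH)$. Graph fibration: a set $F$ of pairs $(K,a)$ with $K$ a graph and $a\in\mathbb{Z}_2^{*V(K)}$, taken up to the equivalence $(K,a)\equiv(K',\phi(a))$ for graph isomorphisms $\phi\colon K\to K'$, such that $(N_0,e),(N_1,e)\in F$ and: (F1) each $F(K):=\{a\mid (K,a)\in F\}$ is empty or a normal subgroup of $\mathbb{Z}_2^{*V(K)}$;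 (F2) $\phi(F(K))=F(K)$ for every automorphism $\phi$ of $K$; (F3) if $(K,a),(H,b)\in F$ and $f$ is a vertex overlap of $K,H$, then $(K\cup_fH,f_K(a)f_H(b))\in F$. We write $K\in F$ if $F(K)\neq\emptyset$. $F$ is easy if moreover (F4): for $K\in F$ and every partition $\pi$ of $V(K)$, $q_\pi(F(K))\subset F(K/\pi)$. Bilabelled graphs: $\mathbf{K}=(K,\mathbf{a},\mathbf{b})$ with $K$ a graph, $\mathbf{a}\in V(K)^k$ (inputs), $\mathbf{b}\in V(K)^l$ (outputs), up to isomorphism of $K$ preserving the tuples; $\mathscr{G}(k,l)$ is the set of these, and $\mathscr{C}(k,l):=\mathscr{C}\cap\mathscr{G}(k,l)$. Operations: tensor product $(K,\mathbf{a},\mathbf{b})\otimes(H,\mathbf{c},\mathbf{d})=(K\sqcup H,\mathbf{a}\mathbf{c},\mathbf{b}\mathbf{d})$; composition (when $|\mathbf{b}|=|\mathbf{c}|$) $(H,\mathbf{c},\mathbf{d})\cdot(K,\mathbf{a},\mathbf{b})=(H\cdot K,\mathbf{a},\mathbf{d})$, where $H\cdot K$ is the quotient of $K\sqcup H$ identifying $b_i$ with $c_i$ for all $i$; involution $(K,\mathbf{a},\mathbf{b})^*=(K,\mathbf{b},\mathbf{a})$; $f$-union $(K,\mathbf{a},\mathbf{b})\cup_f(H,\mathbf{c},\mathbf{d})=(K\cup_fH,f_K(\mathbf{a})f_H(\mathbf{c}),f_K(\mathbf{b})f_H(\mathbf{d}))$; quotient $(K,\mathbf{a},\mathbf{b})/\pi=(K/\pi,q_\pi(\mathbf{a}),q_\pi(\mathbf{b}))$.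 Let $\mathbf{0}=(N_0,\emptyset,\emptyset)$ and, for a one-vertex loopless graph $M$ with vertex $v$, $\mathbf{M}^{k,l}=(M,(v,\dots,v),(v,\dots,v))$ with $k$ inputs and $l$ outputs. For a tuple $\mathbf{b}$, $\ker\mathbf{b}$ is the partition of its positions according to equal entries. A graph category is a set $\mathscr{C}$ of bilabelled graphs containing $\mathbf{M}^{1,1},\mathbf{M}^{0,2},\mathbf{0}$ and closed under tensor products, compositions and involution; it is group-theoretical if it is moreover closed under all quotients $\mathbf{K}\mapsto\mathbf{K}/\pi$. A skew graph category is a set $\mathscr{C}$ of bilabelled graphs containing $\mathbf{0},\mathbf{M}^{1,1},\mathbf{M}^{0,2}$ and closed under all $f$-unions (for all vertex overlaps $f$), under restricted compositions ($\mathbf{H}\cdot\mathbf{K}$ for $\mathbf{K}=(K,\mathbf{a},\mathbf{b}),\mathbf{H}=(H,\mathbf{c},\mathbf{d})\in\mathscr{C}$ with $\ker\mathbf{b}=\ker\mathbf{c}$), and under involution. *)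

theory Defs
  imports "HOL-Algebra.Coset"
begin

text \<open>A finite undirected graph with loops allowed and no multiple edges, with
vertices drawn from nat.  Edges are nonempty vertex sets of size at most 2
(size 1 = loop).  Graphs "up to isomorphism" are handled by requiring all
families of graphs below to be closed under isomorphism.\<close>

type_synonym graph = "nat set \<times> nat set set"

definition V :: "graph \<Rightarrow> nat set" where "V K = fst K"
definition E :: "graph \<Rightarrow> nat set set" where "E K = snd K"

definition wf_graph :: "graph \<Rightarrow> bool" where
  "wf_graph K \<longleftrightarrow> finite (V K) \<and>
     (\<forall>e\<in>E K. e \<subseteq> V K \<and> e \<noteq> {} \<and> card e \<le> 2)"

definition graph_iso :: "(nat \<Rightarrow> nat) \<Rightarrow> graph \<Rightarrow> graph \<Rightarrow> bool" where
  "graph_iso \<phi> K K' \<longleftrightarrow> bij_betw \<phi> (V K) (V K') \<and> (image \<phi>) ` E K = E K'"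

definition N0 :: graph where "N0 = ({}, {})"
definition N1 :: graph where "N1 = ({0}, {})"
definition M :: graph where "M = ({0}, {})"

definition inlv :: "nat \<Rightarrow> nat" where "inlv v = 2 * v"
definition inrv :: "nat \<Rightarrow> nat" where "inrv w = 2 * w + 1"

definition dunion :: "graph \<Rightarrow> graph \<Rightarrow> graph" where
  "dunion K H = (inlv ` V K \<union> inrv ` V H, (image inlv) ` E K \<union> (image inrv) ` E H)"

text \<open>Quotients.  A partition of V(K) is represented by an equivalence relation
R on V(K); each block is represented by its least element.\<close>
definition qmap :: "nat rel \<Rightarrow> nat \<Rightarrow> nat" where
  "qmap R v = Min (R `` {v})"

definition gquot :: "nat rel \<Rightarrow> graph \<Rightarrow> graph" where
  "gquot R K = (qmap R ` V K, (image (qmap R)) ` E K)"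

definition eqcl :: "nat set \<Rightarrow> nat rel \<Rightarrow> nat rel" where
  "eqcl S P = (Id_on S \<union> P \<union> P\<inverse>)\<^sup>+"

definition glue_rel :: "graph \<Rightarrow> graph \<Rightarrow> (nat \<times> nat) set \<Rightarrow> nat rel" where
  "glue_rel K H P = eqcl (V (dunion K H)) ((\<lambda>(v, w). (inlv v, inrv w)) ` P)"

definition glue :: "graph \<Rightarrow> graph \<Rightarrow> (nat \<times> nat) set \<Rightarrow> graph" where
  "glue K H P = gquot (glue_rel K H P) (dunion K H)"

definition glK :: "graph \<Rightarrow> graph \<Rightarrow> (nat \<times> nat) set \<Rightarrow> nat \<Rightarrow> nat" where
  "glK K H P = qmap (glue_rel K H P) \<circ> inlv"

definition glH :: "graph \<Rightarrow> graph \<Rightarrow> (nat \<times> nat) set \<Rightarrow> nat \<Rightarrow> nat" where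
  "glH K H P = qmap (glue_rel K H P) \<circ> inrv"

text \<open>Vertex overlap: injective partial function from V(K) to V(H).
K \<union>_f H = glue K H f, f_K = glK K H f, f_H = glH K H f.\<close>
definition vertex_overlap :: "graph \<Rightarrow> graph \<Rightarrow> (nat \<times> nat) set \<Rightarrow> bool" where
  "vertex_overlap K H f \<longleftrightarrow> f \<subseteq> V K \<times> V H \<and>
     (\<forall>(v, w)\<in>f. \<forall>(v', w')\<in>f. v = v' \<longleftrightarrow> w = w')"

text \<open>Elements are reduced words (no two equal adjacent letters); \<open>red\<close> is the
free reduction (normal form).\<close>
fun red :: "nat list \<Rightarrow> nat list" where
  "red [] = []"
| "red (x # xs) = (case red xs of [] \<Rightarrow> [x] | y # ys \<Rightarrow> (if x = y then ys else x # y # ys))"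

definition Z2F :: "nat set \<Rightarrow> nat list monoid" where
  "Z2F S = \<lparr>carrier = {w. set w \<subseteq> S \<and> red w = w}, mult = (\<lambda>x y. red (x @ y)), one = []\<rparr>"

definition gw :: "nat list \<Rightarrow> nat list" where "gw a = red a"
definition gmul :: "nat list \<Rightarrow> nat list \<Rightarrow> nat list" where "gmul x y = red (x @ y)"
definition ginv :: "nat list \<Rightarrow> nat list" where "ginv x = red (rev x)"
definition gmap :: "(nat \<Rightarrow> nat) \<Rightarrow> nat list \<Rightarrow> nat list" where "gmap \<phi> x = red (map \<phi> x)"

type_synonym gfam = "(graph \<times> nat list) set"

definition Fib :: "gfam \<Rightarrow> graph \<Rightarrow> nat list set" where
  "Fib F K = {a. (K, a) \<in> F}"

text \<open>A set of pairs (K,a) taken up to isomorphism: represented by an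
isomorphism-closed set of concrete pairs.\<close>
definition gfam_rep :: "gfam \<Rightarrow> bool" where
  "gfam_rep F \<longleftrightarrow> (\<forall>(K, a)\<in>F. wf_graph K \<and> a \<in> carrier (Z2F (V K))) \<and>
     (\<forall>K K' \<phi> a. (K, a) \<in> F \<longrightarrow> graph_iso \<phi> K K' \<longrightarrow> (K', gmap \<phi> a) \<in> F)"

definition graph_fibration :: "gfam \<Rightarrow> bool" where
  "graph_fibration F \<longleftrightarrow> gfam_rep F \<and> (N0, []) \<in> F \<and> (N1, []) \<in> F \<and>
     (\<forall>K. wf_graph K \<longrightarrow> Fib F K = {} \<or> Fib F K \<lhd> Z2F (V K)) \<and>
     (\<forall>K \<phi>. wf_graph K \<longrightarrow> graph_iso \<phi> K K \<longrightarrow> gmap \<phi> ` Fib F K = Fib F K) \<and>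
     (\<forall>K a H b f. (K, a) \<in> F \<longrightarrow> (H, b) \<in> F \<longrightarrow> vertex_overlap K H f \<longrightarrow>
        (glue K H f, gmul (gmap (glK K H f) a) (gmap (glH K H f) b)) \<in> F)"

definition easy_fibration :: "gfam \<Rightarrow> bool" where
  "easy_fibration F \<longleftrightarrow> graph_fibration F \<and>
     (\<forall>K R. Fib F K \<noteq> {} \<longrightarrow> equiv (V K) R \<longrightarrow>
        gmap (qmap R) ` Fib F K \<subseteq> Fib F (gquot R K))"

type_synonym bgraph = "graph \<times> nat list \<times> nat list"

fun wf_bgraph :: "bgraph \<Rightarrow> bool" where
  "wf_bgraph (K, a, b) \<longleftrightarrow> wf_graph K \<and> set a \<subseteq> V K \<and> set b \<subseteq> V K"

fun bgraph_iso :: "(nat \<Rightarrow> nat) \<Rightarrow> bgraph \<Rightarrow> bgraph \<Rightarrow> bool" where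
  "bgraph_iso \<phi> (K, a, b) (K', a', b') \<longleftrightarrow> graph_iso \<phi> K K' \<and> map \<phi> a = a' \<and> map \<phi> b = b'"

text \<open>A set of bilabelled graphs up to isomorphism: an isomorphism-closed set of
well-formed concrete bilabelled graphs.\<close>
definition bset_rep :: "bgraph set \<Rightarrow> bool" where
  "bset_rep C \<longleftrightarrow> (\<forall>X\<in>C. wf_bgraph X) \<and>
     (\<forall>X Y \<phi>. X \<in> C \<longrightarrow> bgraph_iso \<phi> X Y \<longrightarrow> Y \<in> C)"

definition bzero :: bgraph where "bzero = (N0, [], [])"
definition M11 :: bgraph where "M11 = (M, [0], [0])"
definition M02 :: bgraph where "M02 = (M, [], [0, 0])"

fun btensor :: "bgraph \<Rightarrow> bgraph \<Rightarrow> bgraph" where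
  "btensor (K, a, b) (H, c, d) = (dunion K H, map inlv a @ map inrv c, map inlv b @ map inrv d)"

text \<open>bcomp (H,c,d) (K,a,b) = (H,c,d) \<cdot> (K,a,b)  (used when |b| = |c|).\<close>
fun bcomp :: "bgraph \<Rightarrow> bgraph \<Rightarrow> bgraph" where
  "bcomp (H, c, d) (K, a, b) =
     (let P = {(b ! i, c ! i) | i. i < length b}
      in (glue K H P, map (glK K H P) a, map (glH K H P) d))"

fun binv :: "bgraph \<Rightarrow> bgraph" where
  "binv (K, a, b) = (K, b, a)"

fun bfunion :: "bgraph \<Rightarrow> (nat \<times> nat) set \<Rightarrow> bgraph \<Rightarrow> bgraph" where
  "bfunion (K, a, b) f (H, c, d) =
     (glue K H f, map (glK K H f) a @ map (glH K H f) c, map (glK K H f) b @ map (glH K H f) d)"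

fun bquot :: "nat rel \<Rightarrow> bgraph \<Rightarrow> bgraph" where
  "bquot R (K, a, b) = (gquot R K, map (qmap R) a, map (qmap R) b)"

fun inputs :: "bgraph \<Rightarrow> nat list" where "inputs (K, a, b) = a"
fun outputs :: "bgraph \<Rightarrow> nat list" where "outputs (K, a, b) = b"

text \<open>ker b = ker c (as partitions of the positions; in particular same length).\<close>
definition same_ker :: "nat list \<Rightarrow> nat list \<Rightarrow> bool" where
  "same_ker b c \<longleftrightarrow> length b = length c \<and>
     (\<forall>i < length b. \<forall>j < length b. b ! i = b ! j \<longleftrightarrow> c ! i = c ! j)"

definition graph_category :: "bgraph set \<Rightarrow> bool" where
  "graph_category C \<longleftrightarrow> bset_rep C \<and> M11 \<in> C \<and> M02 \<in> C \<and> bzero \<in> C \<and>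
     (\<forall>X\<in>C. \<forall>Y\<in>C. btensor X Y \<in> C) \<and>
     (\<forall>X\<in>C. \<forall>Y\<in>C. length (outputs X) = length (inputs Y) \<longrightarrow> bcomp Y X \<in> C) \<and>
     (\<forall>X\<in>C. binv X \<in> C)"

definition group_theoretical :: "bgraph set \<Rightarrow> bool" where
  "group_theoretical C \<longleftrightarrow> graph_category C \<and>
     (\<forall>K a b R. (K, a, b) \<in> C \<longrightarrow> equiv (V K) R \<longrightarrow> bquot R (K, a, b) \<in> C)"

definition skew_graph_category :: "bgraph set \<Rightarrow> bool" where
  "skew_graph_category C \<longleftrightarrow> bset_rep C \<and> bzero \<in> C \<and> M11 \<in> C \<and> M02 \<in> C \<and>
     (\<forall>K a b H c d f. (K, a, b) \<in> C \<longrightarrow> (H, c, d) \<in> C \<longrightarrow> vertex_overlap K H f \<longrightarrow>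
        bfunion (K, a, b) f (H, c, d) \<in> C) \<and>
     (\<forall>K a b H c d. (K, a, b) \<in> C \<longrightarrow> (H, c, d) \<in> C \<longrightarrow> same_ker b c \<longrightarrow>
        bcomp (H, c, d) (K, a, b) \<in> C) \<and>
     (\<forall>X\<in>C. binv X \<in> C)"

definition C_of :: "gfam \<Rightarrow> bgraph set" where
  "C_of F = {(K, a, b). wf_bgraph (K, a, b) \<and> (K, gmul (ginv (gw a)) (gw b)) \<in> F}"

definition F_of :: "bgraph set \<Rightarrow> gfam" where
  "F_of C = {(K, gmul (ginv (gw a)) (gw b)) | K a b. (K, a, b) \<in> C}"

end

theory Submission
  imports Defs
begin


definition cc :: "nat \<Rightarrow> nat list \<Rightarrow> nat list" where
  "cc x w = (case w of [] \<Rightarrow> [x] | y # ys \<Rightarrow> (if x = y then ys else x # y # ys))"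

lemma red_Cons: "red (x # xs) = cc x (red xs)"
  by (simp add: cc_def)

declare red.simps(2)[simp del]

fun reduced :: "nat list \<Rightarrow> bool" where
  "reduced [] = True"
| "reduced [x] = True"
| "reduced (x # y # ys) = (x \<noteq> y \<and> reduced (y # ys))"

lemma reduced_tl: "reduced (x # ys) \<Longrightarrow> reduced ys"
  by (cases ys) auto

lemma reduced_cc: "reduced w \<Longrightarrow> reduced (cc x w)"
  by (cases w rule: reduced.cases) (auto simp: cc_def)

lemma reduced_red: "reduced (red w)"
  by (induction w) (auto simp: red_Cons reduced_cc)

lemma red_reduced: "reduced w \<Longrightarrow> red w = w"
proof (induction w)
  case Nil then show ?case by simp
next
  case (Cons x xs)
  then have "red xs = xs" using reduced_tl by blast
  then show ?case using Cons.prems by (cases xs) (auto simp: red_Cons cc_def)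
qed

lemma red_idem[simp]: "red (red w) = red w"
  by (simp add: red_reduced reduced_red)

lemma red_eq_iff_reduced: "red w = w \<longleftrightarrow> reduced w"
  by (metis red_reduced reduced_red)

lemma cc_cc: "reduced w \<Longrightarrow> cc x (cc x w) = w"
  by (cases w rule: reduced.cases) (auto simp: cc_def)

lemma set_cc: "set (cc x w) \<subseteq> insert x (set w)"
  by (auto simp: cc_def split: list.splits)

lemma set_red: "set (red w) \<subseteq> set w"
  by (induction w) (use set_cc in \<open>fastforce simp: red_Cons\<close>)+

lemma red_app_red2[simp]: "red (xs @ red ys) = red (xs @ ys)"
  by (induction xs) (auto simp: red_Cons)

lemma red_cc_app: "reduced w \<Longrightarrow> red (cc x w @ ys) = cc x (red (w @ ys))"
proof (cases w)
  case Nil then show ?thesis by (simp add: cc_def red_Cons)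
next
  case (Cons y ws)
  assume r: "reduced w"
  show ?thesis
  proof (cases "x = y")
    case True
    have a: "cc x w = ws" using Cons True by (simp add: cc_def)
    have "cc x (red (w @ ys)) = cc x (cc x (red (ws @ ys)))" using Cons True by (simp add: red_Cons)
    also have "\<dots> = red (ws @ ys)" by (rule cc_cc[OF reduced_red])
    finally show ?thesis using a by simp
  next
    case False then show ?thesis using Cons by (simp add: cc_def red_Cons)
  qed
qed

lemma red_app_red1[simp]: "red (red xs @ ys) = red (xs @ ys)"
proof (induction xs arbitrary: ys)
  case Nil then show ?case by simp
next
  case (Cons x xs)
  have "red (red (x # xs) @ ys) = red (cc x (red xs) @ ys)" by (simp add: red_Cons)
  also have "\<dots> = cc x (red (red xs @ ys))" by (rule red_cc_app[OF reduced_red])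
  also have "\<dots> = cc x (red (xs @ ys))" using Cons by simp
  finally show ?case by (simp add: red_Cons)
qed

lemma red_Cons_red[simp]: "red (x # red ys) = red (x # ys)"
  using red_app_red2[of "[x]"] by simp

lemma red_mid[simp]: "red (u @ red x @ w) = red (u @ x @ w)"
  by (metis red_app_red1 red_app_red2)

lemma red_cancel_front: "red (x # x # zs) = red zs"
  unfolding red_Cons by (rule cc_cc[OF reduced_red])

lemma red_cancel: "red (u @ x # x # w) = red (u @ w)"
  by (induction u) (simp add: red_cancel_front, simp add: red_Cons)

lemma red_cancel_word: "red (u @ v @ rev v @ w) = red (u @ w)"
proof (induction v arbitrary: u w)
  case Nil then show ?case by simp
next
  case (Cons x v)
  have "red (u @ (x # v) @ rev (x # v) @ w) = red ((u @ [x]) @ v @ rev v @ (x # w))" by simp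
  also have "\<dots> = red ((u @ [x]) @ x # w)" by (rule Cons)
  also have "\<dots> = red (u @ w)" using red_cancel[of u x w] by simp
  finally show ?case .
qed

lemma red_cancel_word': "red (u @ rev v @ v @ w) = red (u @ w)"
  using red_cancel_word[of u "rev v" w] by simp

lemma red_cong: "red x = red x' \<Longrightarrow> red (u @ x @ w) = red (u @ x' @ w)"
  by (metis red_mid)

lemma red_map_cons: "reduced w \<Longrightarrow> red (map f (cc x w)) = red (map f (x # w))"
proof (cases w)
  case Nil then show ?thesis by (simp add: cc_def)
next
  case (Cons y ws)
  then show ?thesis using red_cancel[of "[]" "f x" "map f ws"]
    by (auto simp: cc_def)
qed

lemma red_map_red[simp]: "red (map f (red x)) = red (map f x)"
proof (induction x)
  case Nil then show ?case by simp
next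
  case (Cons x xs)
  have "red (map f (red (x # xs))) = red (map f (x # red xs))"
    by (simp add: red_Cons red_map_cons reduced_red)
  also have "\<dots> = red ([f x] @ map f (red xs) @ [])" by simp
  also have "\<dots> = red ([f x] @ red (map f (red xs)) @ [])" by (simp only: red_mid)
  also have "\<dots> = red ([f x] @ map f xs)" using Cons by simp
  finally show ?case by simp
qed

lemma red_rev_red[simp]: "red (rev (red x)) = red (rev x)"
proof (induction x)
  case Nil then show ?case by simp
next
  case (Cons x xs)
  have r: "reduced (red xs)" by (rule reduced_red)
  have "red (rev (cc x (red xs))) = red (rev (red xs) @ [x])"
  proof (cases "red xs")
    case Nil then show ?thesis by (simp add: cc_def)
  next
    case (Cons y ys)
    show ?thesis
    proof (cases "x = y")
      case True
      then show ?thesis using Cons red_cancel[of "rev ys" x "[]"] by (simp add: cc_def)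
    next
      case False then show ?thesis using Cons by (simp add: cc_def)
    qed
  qed
  also have "\<dots> = red (red (rev (red xs)) @ [x])" by simp
  also have "\<dots> = red (red (rev xs) @ [x])" using Cons by simp
  finally show ?case by (simp add: red_Cons)
qed

lemma red_mid_map[simp]: "red (u @ map f (red x) @ w) = red (u @ map f x @ w)"
  by (metis red_map_red red_mid)
lemma red_mid_rev[simp]: "red (u @ rev (red x) @ w) = red (u @ rev x @ w)"
  by (metis red_rev_red red_mid)
lemma red_app_map1[simp]: "red (map f (red x) @ w) = red (map f x @ w)"
  using red_mid_map[of "[]"] by simp
lemma red_app_map2[simp]: "red (u @ map f (red x)) = red (u @ map f x)"
  using red_mid_map[of _ _ _ "[]"] by simp
lemma red_app_rev1[simp]: "red (rev (red x) @ w) = red (rev x @ w)"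
  using red_mid_rev[of "[]"] by simp
lemma red_app_rev2[simp]: "red (u @ rev (red x)) = red (u @ rev x)"
  using red_mid_rev[of _ _ "[]"] by simp

lemma red_self_inv[simp]: "red (v @ rev v) = []"
  using red_cancel_word[of "[]" v "[]"] by simp
lemma red_self_inv'[simp]: "red (rev v @ v) = []"
  using red_cancel_word'[of "[]" v "[]"] by simp

lemma gmul_red: "gmul x y = red (x @ y)" by (simp add: gmul_def)

lemma gmap_hom_mul: "gmap f (gmul x y) = gmul (gmap f x) (gmap f y)"
  by (simp add: gmap_def gmul_def)
lemma gmap_hom_inv: "gmap f (ginv x) = ginv (gmap f x)"
  by (simp add: gmap_def ginv_def rev_map)
lemma gmap_gw: "gmap f (gw a) = gw (map f a)"
  by (simp add: gmap_def gw_def)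
lemma gmap_comp: "gmap f (gmap g x) = gmap (f \<circ> g) x"
  by (simp add: gmap_def)
lemma gmap_cong: "(\<And>v. v \<in> set x \<Longrightarrow> f v = g v) \<Longrightarrow> gmap f x = gmap g x"
  by (simp add: gmap_def cong: map_cong)

lemma set_gmap: "set (gmap f x) \<subseteq> f ` set x"
  using set_red[of "map f x"] by (auto simp: gmap_def)

lemma carrier_Z2F: "x \<in> carrier (Z2F S) \<longleftrightarrow> set x \<subseteq> S \<and> red x = x"
  by (simp add: Z2F_def)

lemma mult_Z2F[simp]: "mult (Z2F S) x y = red (x @ y)"
  by (simp add: Z2F_def)
lemma one_Z2F[simp]: "one (Z2F S) = []"
  by (simp add: Z2F_def)

lemma group_Z2F: "group (Z2F S)"
proof (rule groupI)
  fix x y assume "x \<in> carrier (Z2F S)" "y \<in> carrier (Z2F S)"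
  then show "x \<otimes>\<^bsub>Z2F S\<^esub> y \<in> carrier (Z2F S)"
    using set_red[of "x @ y"] by (auto simp: carrier_Z2F)
next
  show "\<one>\<^bsub>Z2F S\<^esub> \<in> carrier (Z2F S)" by (simp add: carrier_Z2F)
next
  fix x y z
  show "x \<otimes>\<^bsub>Z2F S\<^esub> y \<otimes>\<^bsub>Z2F S\<^esub> z = x \<otimes>\<^bsub>Z2F S\<^esub> (y \<otimes>\<^bsub>Z2F S\<^esub> z)"
    by simp
next
  fix x assume "x \<in> carrier (Z2F S)"
  then show "\<one>\<^bsub>Z2F S\<^esub> \<otimes>\<^bsub>Z2F S\<^esub> x = x" by (simp add: carrier_Z2F)
next
  fix x assume x: "x \<in> carrier (Z2F S)"
  show "\<exists>y\<in>carrier (Z2F S). y \<otimes>\<^bsub>Z2F S\<^esub> x = \<one>\<^bsub>Z2F S\<^esub>"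
  proof (intro bexI)
    show "red (rev x) \<otimes>\<^bsub>Z2F S\<^esub> x = \<one>\<^bsub>Z2F S\<^esub>" by simp
    show "red (rev x) \<in> carrier (Z2F S)"
      using x set_red[of "rev x"] by (auto simp: carrier_Z2F)
  qed
qed

lemma inv_Z2F: "x \<in> carrier (Z2F S) \<Longrightarrow> inv\<^bsub>Z2F S\<^esub> x = red (rev x)"
  apply (rule group.inv_equality[OF group_Z2F])
  using set_red[of "rev x"] by (auto simp: carrier_Z2F)

lemma normal_Z2F_iff: "N \<lhd> Z2F S \<longleftrightarrow> N \<subseteq> carrier (Z2F S) \<and> [] \<in> N \<and>
    (\<forall>x\<in>N. \<forall>y\<in>N. red (x @ y) \<in> N) \<and> (\<forall>x\<in>N. red (rev x) \<in> N) \<and>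
    (\<forall>x\<in>carrier (Z2F S). \<forall>h\<in>N. red (x @ h @ rev x) \<in> N)"
proof -
  have g: "group (Z2F S)" by (rule group_Z2F)
  have sg: "subgroup N (Z2F S) \<longleftrightarrow> N \<subseteq> carrier (Z2F S) \<and> [] \<in> N \<and>
    (\<forall>x\<in>N. \<forall>y\<in>N. red (x @ y) \<in> N) \<and> (\<forall>x\<in>N. red (rev x) \<in> N)"
  proof
    assume "subgroup N (Z2F S)"
    then interpret subgroup N "Z2F S" .
    show "N \<subseteq> carrier (Z2F S) \<and> [] \<in> N \<and>
    (\<forall>x\<in>N. \<forall>y\<in>N. red (x @ y) \<in> N) \<and> (\<forall>x\<in>N. red (rev x) \<in> N)"
      using subset m_closed one_closed m_inv_closed inv_Z2F by (metis mult_Z2F one_Z2F subsetD)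
  next
    assume a: "N \<subseteq> carrier (Z2F S) \<and> [] \<in> N \<and>
    (\<forall>x\<in>N. \<forall>y\<in>N. red (x @ y) \<in> N) \<and> (\<forall>x\<in>N. red (rev x) \<in> N)"
    show "subgroup N (Z2F S)"
    proof
      show "N \<subseteq> carrier (Z2F S)" using a by blast
      show "\<And>x y. x \<in> N \<Longrightarrow> y \<in> N \<Longrightarrow> x \<otimes>\<^bsub>Z2F S\<^esub> y \<in> N" using a by simp
      show "\<one>\<^bsub>Z2F S\<^esub> \<in> N" using a by simp
      show "\<And>x. x \<in> N \<Longrightarrow> inv\<^bsub>Z2F S\<^esub> x \<in> N" using a inv_Z2F by (metis subsetD)
    qed
  qed
  have c: "\<And>x h. x \<in> carrier (Z2F S) \<Longrightarrow> x \<otimes>\<^bsub>Z2F S\<^esub> h \<otimes>\<^bsub>Z2F S\<^esub> inv\<^bsub>Z2F S\<^esub> x = red (x @ h @ rev x)"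
    by (simp add: inv_Z2F)
  show ?thesis
    unfolding group.normal_inv_iff[OF g] sg using c by simp
qed




lemma V_simp[simp]: "V (A, B) = A" and E_simp[simp]: "E (A, B) = B"
  by (simp_all add: V_def E_def)

lemma inlv_inrv[simp]: "inlv v \<noteq> inrv w" "inrv w \<noteq> inlv v"
  "inlv v = inlv v' \<longleftrightarrow> v = v'" "inrv w = inrv w' \<longleftrightarrow> w = w'"
  by (simp_all add: inlv_def inrv_def) presburger+

lemma wf_image_edge:
  assumes "finite A" "e \<subseteq> A" "e \<noteq> {}" "card e \<le> 2"
  shows "g ` e \<subseteq> g ` A \<and> g ` e \<noteq> {} \<and> card (g ` e) \<le> 2"
proof -
  have "finite e" using assms(1,2) finite_subset by blast
  then have "card (g ` e) \<le> card e" by (rule card_image_le)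
  then show ?thesis using assms by auto
qed

lemma wf_gquot: assumes "wf_graph K" shows "wf_graph (gquot R K)"
  unfolding wf_graph_def
proof (rule conjI[OF _ ballI])
  show "finite (V (gquot R K))" using assms by (simp add: wf_graph_def gquot_def)
  fix e' assume "e' \<in> E (gquot R K)"
  then obtain e where e: "e \<in> E K" "e' = qmap R ` e" by (auto simp: gquot_def)
  have "e \<subseteq> V K" "e \<noteq> {}" "card e \<le> 2" "finite (V K)" using assms e by (auto simp: wf_graph_def)
  then show "e' \<subseteq> V (gquot R K) \<and> e' \<noteq> {} \<and> card e' \<le> 2"
    using wf_image_edge[of "V K" e "qmap R"] e by (simp add: gquot_def)
qed

lemma wf_dunion: assumes K: "wf_graph K" and H: "wf_graph H" shows "wf_graph (dunion K H)"
  unfolding wf_graph_def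
proof (rule conjI[OF _ ballI])
  show "finite (V (dunion K H))" using assms by (simp add: wf_graph_def dunion_def)
  fix e' assume "e' \<in> E (dunion K H)"
  then consider e where "e \<in> E K" "e' = inlv ` e" | e where "e \<in> E H" "e' = inrv ` e"
    by (auto simp: dunion_def)
  then show "e' \<subseteq> V (dunion K H) \<and> e' \<noteq> {} \<and> card e' \<le> 2"
  proof cases
    case 1
    have "e \<subseteq> V K" "e \<noteq> {}" "card e \<le> 2" "finite (V K)" using K 1 by (auto simp: wf_graph_def)
    then show ?thesis using wf_image_edge[of "V K" e inlv] 1 by (auto simp: dunion_def)
  next
    case 2
    have "e \<subseteq> V H" "e \<noteq> {}" "card e \<le> 2" "finite (V H)" using H 2 by (auto simp: wf_graph_def)
    then show ?thesis using wf_image_edge[of "V H" e inrv] 2 by (auto simp: dunion_def)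
  qed
qed

lemma wf_glue: "wf_graph K \<Longrightarrow> wf_graph H \<Longrightarrow> wf_graph (glue K H f)"
  by (simp add: glue_def wf_gquot wf_dunion)

lemma V_dunion: "V (dunion K H) = inlv ` V K \<union> inrv ` V H"
  by (simp add: dunion_def)

lemma glK_in: "v \<in> V K \<Longrightarrow> glK K H f v \<in> V (glue K H f)"
  by (simp add: glK_def glue_def gquot_def dunion_def)
lemma glH_in: "w \<in> V H \<Longrightarrow> glH K H f w \<in> V (glue K H f)"
  by (simp add: glH_def glue_def gquot_def dunion_def)

lemma eqcl_sub: assumes "P \<subseteq> S \<times> S" shows "eqcl S P \<subseteq> S \<times> S"
proof -
  have "Id_on S \<union> P \<union> P\<inverse> \<subseteq> S \<times> S" using assms by auto
  then show ?thesis unfolding eqcl_def by (rule trancl_subset_Sigma)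
qed

lemma equiv_eqcl: assumes P: "P \<subseteq> S \<times> S" shows "equiv S (eqcl S P)"
proof (rule equivI)
  show "eqcl S P \<subseteq> S \<times> S" by (rule eqcl_sub[OF P])
  have "Id_on S \<subseteq> eqcl S P" unfolding eqcl_def by auto
  then show "refl_on S (eqcl S P)"
    unfolding refl_on_def using eqcl_sub[OF P] by auto
  show "sym (eqcl S P)" unfolding eqcl_def
    by (rule sym_trancl) (auto simp: sym_def)
  show "trans (eqcl S P)" unfolding eqcl_def by (rule trans_trancl)
qed

lemma qmap_equiv: "equiv S R \<Longrightarrow> finite S \<Longrightarrow> u \<in> S \<Longrightarrow> (u, qmap R u) \<in> R"
proof -
  assume e: "equiv S R" and f: "finite S" and u: "u \<in> S"
  have "R `` {u} \<subseteq> S" using e by (auto simp: equiv_def refl_on_def)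
  then have "finite (R `` {u})" using f finite_subset by blast
  moreover have "u \<in> R `` {u}" using e u by (auto simp: equiv_def refl_on_def)
  ultimately have "Min (R `` {u}) \<in> R `` {u}" by (intro Min_in) auto
  then show ?thesis by (simp add: qmap_def)
qed

lemma qmap_eq: "equiv S R \<Longrightarrow> (u, u') \<in> R \<Longrightarrow> qmap R u = qmap R u'"
  unfolding qmap_def using equiv_class_eq by metis

lemma glue_rel_equiv: "f \<subseteq> V K \<times> V H \<Longrightarrow> equiv (V (dunion K H)) (glue_rel K H f)"
  unfolding glue_rel_def by (rule equiv_eqcl) (auto simp: V_dunion)

lemma glue_iso:
  assumes wfK: "wf_graph K" and wfH: "wf_graph H" and fsub: "f \<subseteq> V K \<times> V H"
    and ia: "inj_on \<alpha> (V K)" and ib: "inj_on \<beta> (V H)"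
    and VG: "V G = \<alpha> ` V K \<union> \<beta> ` V H"
    and EG: "E G = (image \<alpha>) ` E K \<union> (image \<beta>) ` E H"
    and ab: "\<And>v w. v \<in> V K \<Longrightarrow> w \<in> V H \<Longrightarrow> \<alpha> v = \<beta> w \<longleftrightarrow> (v, w) \<in> f"
  shows "\<exists>\<phi>. graph_iso \<phi> (glue K H f) G \<and> (\<forall>v\<in>V K. \<phi> (glK K H f v) = \<alpha> v)
            \<and> (\<forall>w\<in>V H. \<phi> (glH K H f w) = \<beta> w)"
proof -
  define S where "S = V (dunion K H)"
  define R where "R = glue_rel K H f"
  define P where "P = (\<lambda>(v, w). (inlv v, inrv w)) ` f"
  define \<theta> where "\<theta> n = (if even n then \<alpha> (n div 2) else \<beta> (n div 2))" for n
  have th_l[simp]: "\<theta> (inlv v) = \<alpha> v" for v by (simp add: \<theta>_def inlv_def)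
  have th_r[simp]: "\<theta> (inrv v) = \<beta> v" for v by (simp add: \<theta>_def inrv_def)
  have S: "S = inlv ` V K \<union> inrv ` V H" by (simp add: S_def V_dunion)
  have finS: "finite S" using wfK wfH by (simp add: S wf_graph_def)
  have R: "R = (Id_on S \<union> P \<union> P\<inverse>)\<^sup>+" by (simp add: R_def glue_rel_def eqcl_def S_def P_def)
  have eqR: "equiv S R" unfolding R_def S_def by (rule glue_rel_equiv[OF fsub])
  have abf: "\<alpha> v = \<beta> w" if "(v, w) \<in> f" for v w using ab fsub that by blast
  have R1: "\<theta> u = \<theta> u'" if "(u, u') \<in> R" for u u'
    using that unfolding R
  proof (induction rule: trancl_induct)
    case (base y)
    then show ?case using abf by (auto simp: P_def)
  next
    case (step y z)
    then show ?case using abf by (auto simp: P_def)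
  qed
  have R2: "(u, u') \<in> R" if uS: "u \<in> S" and u'S: "u' \<in> S" and th: "\<theta> u = \<theta> u'" for u u'
  proof -
    have "(u, u') \<in> Id_on S \<union> P \<union> P\<inverse>"
    proof -
      consider v v' where "v \<in> V K" "v' \<in> V K" "u = inlv v" "u' = inlv v'"
        | v w' where "v \<in> V K" "w' \<in> V H" "u = inlv v" "u' = inrv w'"
        | w v' where "w \<in> V H" "v' \<in> V K" "u = inrv w" "u' = inlv v'"
        | w w' where "w \<in> V H" "w' \<in> V H" "u = inrv w" "u' = inrv w'"
        using uS u'S unfolding S by blast
      then show ?thesis
      proof cases
        case 1 then show ?thesis using th uS ia by (auto simp: inj_on_def)
      next
        case 2 then have "(v, w') \<in> f" using th ab by simp
        then show ?thesis using 2 by (auto simp: P_def)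
      next
        case 3 then have "(v', w) \<in> f" using th ab by (metis th_l th_r)
        then show ?thesis using 3 by (auto simp: P_def)
      next
        case 4 then show ?thesis using th uS ib by (auto simp: inj_on_def)
      qed
    qed
    then show ?thesis unfolding R by (rule r_into_trancl)
  qed
  have q1: "\<theta> (qmap R u) = \<theta> u" if "u \<in> S" for u
    using R1[OF qmap_equiv[OF eqR finS that]] by simp
  have q2: "qmap R u = qmap R u'" if "u \<in> S" "u' \<in> S" "\<theta> u = \<theta> u'" for u u'
    using qmap_eq[OF eqR R2[OF that]] .
  have Vg: "V (glue K H f) = qmap R ` S"
    by (simp add: glue_def gquot_def R_def S_def)
  have Eg: "E (glue K H f) = (image (qmap R)) ` ((image inlv) ` E K \<union> (image inrv) ` E H)"
    by (simp add: glue_def gquot_def R_def dunion_def)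
  have "bij_betw \<theta> (V (glue K H f)) (V G)"
  proof (rule bij_betw_imageI)
    show "inj_on \<theta> (V (glue K H f))"
      unfolding Vg
    proof (rule inj_onI)
      fix x y assume "x \<in> qmap R ` S" "y \<in> qmap R ` S" "\<theta> x = \<theta> y"
      then obtain u u' where u: "u \<in> S" "u' \<in> S" "x = qmap R u" "y = qmap R u'" "\<theta> x = \<theta> y"
        by blast
      then have "\<theta> u = \<theta> u'" using q1 by metis
      then show "x = y" using q2 u by blast
    qed
    have "\<theta> ` qmap R ` S = \<theta> ` S" unfolding image_image
      by (rule image_cong[OF refl]) (rule q1)
    then show "\<theta> ` V (glue K H f) = V G" unfolding Vg VG S image_Un image_image by simp
  qed
  moreover have "(image \<theta>) ` E (glue K H f) = E G"
  proof -
    have a: "\<theta> ` qmap R ` inlv ` e = \<alpha> ` e" if "e \<in> E K" for e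
    proof -
      have "e \<subseteq> V K" using wfK that by (auto simp: wf_graph_def)
      then have "\<And>v. v \<in> e \<Longrightarrow> \<theta> (qmap R (inlv v)) = \<alpha> v" using q1 S by auto
      then show ?thesis unfolding image_image by (rule image_cong[OF refl])
    qed
    have b: "\<theta> ` qmap R ` inrv ` e = \<beta> ` e" if "e \<in> E H" for e
    proof -
      have "e \<subseteq> V H" using wfH that by (auto simp: wf_graph_def)
      then have "\<And>v. v \<in> e \<Longrightarrow> \<theta> (qmap R (inrv v)) = \<beta> v" using q1 S by auto
      then show ?thesis unfolding image_image by (rule image_cong[OF refl])
    qed
    have "(\<lambda>e. \<theta> ` qmap R ` inlv ` e) ` E K = image \<alpha> ` E K"
      using a by (rule image_cong[OF refl])
    moreover have "(\<lambda>e. \<theta> ` qmap R ` inrv ` e) ` E H = image \<beta> ` E H"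
      using b by (rule image_cong[OF refl])
    ultimately show ?thesis unfolding Eg EG image_Un image_image by simp
  qed
  moreover have "\<forall>v\<in>V K. \<theta> (glK K H f v) = \<alpha> v"
    using q1 S by (simp add: glK_def R_def)
  moreover have "\<forall>w\<in>V H. \<theta> (glH K H f w) = \<beta> w"
    using q1 S by (simp add: glH_def R_def)
  ultimately show ?thesis unfolding graph_iso_def by blast
qed

lemma glue_iso_overlap:
  assumes ia: "inj_on \<alpha> (V K)" and ib: "inj_on \<beta> (V H)" and fsub: "f \<subseteq> V K \<times> V H"
    and ab: "\<And>v w. v \<in> V K \<Longrightarrow> w \<in> V H \<Longrightarrow> \<alpha> v = \<beta> w \<longleftrightarrow> (v, w) \<in> f"
  shows "vertex_overlap K H f"
  unfolding vertex_overlap_def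
proof (intro conjI fsub ballI, clarify)
  fix v w v' w' assume 1: "(v, w) \<in> f" and 2: "(v', w') \<in> f"
  then have m: "v \<in> V K" "w \<in> V H" "v' \<in> V K" "w' \<in> V H" using fsub by auto
  have e: "\<alpha> v = \<beta> w" "\<alpha> v' = \<beta> w'" using ab m 1 2 by auto
  show "v = v' \<longleftrightarrow> w = w'"
  proof
    assume "v = v'" then have "\<beta> w = \<beta> w'" using e by simp
    then show "w = w'" using ib m inj_on_def by metis
  next
    assume "w = w'" then have "\<alpha> v = \<alpha> v'" using e by simp
    then show "v = v'" using ia m inj_on_def by metis
  qed
qed




definition disc :: "nat set \<Rightarrow> graph" where "disc T = (T, {})"

lemma V_disc[simp]: "V (disc T) = T" and E_disc[simp]: "E (disc T) = {}"
  by (simp_all add: disc_def)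
lemma V_M[simp]: "V M = {0}" and E_M[simp]: "E M = {}"
  by (simp_all add: M_def)
lemma N0_disc: "N0 = disc {}" by (simp add: N0_def disc_def)

lemma image_id_E[simp]: "image id ` A = A" "image (\<lambda>x. x) ` A = A"
  by (simp_all add: image_id)

lemma pairs_nth: "{(l ! i, l ! i) | i. i < length l} = Id_on (set l)"
  by (auto simp: in_set_conv_nth Id_on_def)

context
  fixes C assumes sk: "skew_graph_category C"
begin

lemma sk_rep: "bset_rep C" using sk by (simp add: skew_graph_category_def)

lemma sk_wf: "X \<in> C \<Longrightarrow> wf_bgraph X"
  using sk_rep by (simp add: bset_rep_def)

lemma sk_wf3: "(K, a, b) \<in> C \<Longrightarrow> wf_graph K \<and> set a \<subseteq> V K \<and> set b \<subseteq> V K"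
  using sk_wf by fastforce

lemma sk_iso: "X \<in> C \<Longrightarrow> bgraph_iso \<phi> X Y \<Longrightarrow> Y \<in> C"
  using sk_rep unfolding bset_rep_def by blast

lemma sk_bzero: "(N0, [], []) \<in> C" using sk by (simp add: skew_graph_category_def bzero_def)
lemma sk_M11: "(M, [0], [0]) \<in> C" using sk by (simp add: skew_graph_category_def M11_def)
lemma sk_M02: "(M, [], [0, 0]) \<in> C" using sk by (simp add: skew_graph_category_def M02_def)
lemma sk_binv: "(K, a, b) \<in> C \<Longrightarrow> (K, b, a) \<in> C"
  using sk unfolding skew_graph_category_def by (metis binv.simps)

lemma sk_union: "(K, a, b) \<in> C \<Longrightarrow> (H, c, d) \<in> C \<Longrightarrow> vertex_overlap K H f \<Longrightarrow>
   bfunion (K, a, b) f (H, c, d) \<in> C"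
  using sk unfolding skew_graph_category_def by blast

lemma sk_comp: "(K, a, b) \<in> C \<Longrightarrow> (H, c, d) \<in> C \<Longrightarrow> same_ker b c \<Longrightarrow>
   bcomp (H, c, d) (K, a, b) \<in> C"
  using sk unfolding skew_graph_category_def by blast

lemma sk_union_iso:
  assumes X: "(K, a, b) \<in> C" and Y: "(H, c, d) \<in> C" and fsub: "f \<subseteq> V K \<times> V H"
    and ia: "inj_on \<alpha> (V K)" and ib: "inj_on \<beta> (V H)"
    and VG: "V G = \<alpha> ` V K \<union> \<beta> ` V H"
    and EG: "E G = (image \<alpha>) ` E K \<union> (image \<beta>) ` E H"
    and ab: "\<And>v w. v \<in> V K \<Longrightarrow> w \<in> V H \<Longrightarrow> \<alpha> v = \<beta> w \<longleftrightarrow> (v, w) \<in> f"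
  shows "(G, map \<alpha> a @ map \<beta> c, map \<alpha> b @ map \<beta> d) \<in> C"
proof -
  have wX: "wf_graph K" "set a \<subseteq> V K" "set b \<subseteq> V K" using sk_wf3[OF X] by auto
  have wY: "wf_graph H" "set c \<subseteq> V H" "set d \<subseteq> V H" using sk_wf3[OF Y] by auto
  have ov: "vertex_overlap K H f" by (rule glue_iso_overlap[OF ia ib fsub ab])
  have U: "bfunion (K, a, b) f (H, c, d) \<in> C" by (rule sk_union[OF X Y ov])
  obtain \<phi> where \<phi>: "graph_iso \<phi> (glue K H f) G" "\<forall>v\<in>V K. \<phi> (glK K H f v) = \<alpha> v"
     "\<forall>w\<in>V H. \<phi> (glH K H f w) = \<beta> w"
    using glue_iso[OF wX(1) wY(1) fsub ia ib VG EG ab] by blast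
  have m1: "map \<phi> (map (glK K H f) x) = map \<alpha> x" if "set x \<subseteq> V K" for x
    using that \<phi>(2) by (induction x) auto
  have m2: "map \<phi> (map (glH K H f) x) = map \<beta> x" if "set x \<subseteq> V H" for x
    using that \<phi>(3) by (induction x) auto
  have "bgraph_iso \<phi> (bfunion (K, a, b) f (H, c, d)) (G, map \<alpha> a @ map \<beta> c, map \<alpha> b @ map \<beta> d)"
    using \<phi>(1) m1 m2 wX wY by simp
  then show ?thesis using sk_iso U by blast
qed

lemma sk_comp_iso:
  assumes X: "(K, a, b) \<in> C" and Y: "(H, c, d) \<in> C" and sk': "same_ker b c"
    and P: "P = {(b ! i, c ! i) | i. i < length b}"
    and ia: "inj_on \<alpha> (V K)" and ib: "inj_on \<beta> (V H)"
    and VG: "V G = \<alpha> ` V K \<union> \<beta> ` V H"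
    and EG: "E G = (image \<alpha>) ` E K \<union> (image \<beta>) ` E H"
    and ab: "\<And>v w. v \<in> V K \<Longrightarrow> w \<in> V H \<Longrightarrow> \<alpha> v = \<beta> w \<longleftrightarrow> (v, w) \<in> P"
  shows "(G, map \<alpha> a, map \<beta> d) \<in> C"
proof -
  have wX: "wf_graph K" "set a \<subseteq> V K" "set b \<subseteq> V K" using sk_wf3[OF X] by auto
  have wY: "wf_graph H" "set c \<subseteq> V H" "set d \<subseteq> V H" using sk_wf3[OF Y] by auto
  have lbc: "length b = length c" using sk' by (simp add: same_ker_def)
  have fsub: "P \<subseteq> V K \<times> V H" unfolding P using wX wY lbc by (auto simp: nth_mem subsetD)
  have U: "bcomp (H, c, d) (K, a, b) \<in> C" by (rule sk_comp[OF X Y sk'])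
  obtain \<phi> where \<phi>: "graph_iso \<phi> (glue K H P) G" "\<forall>v\<in>V K. \<phi> (glK K H P v) = \<alpha> v"
     "\<forall>w\<in>V H. \<phi> (glH K H P w) = \<beta> w"
    using glue_iso[OF wX(1) wY(1) fsub ia ib VG EG ab] by blast
  have m1: "map \<phi> (map (glK K H P) x) = map \<alpha> x" if "set x \<subseteq> V K" for x
    using that \<phi>(2) by (induction x) auto
  have m2: "map \<phi> (map (glH K H P) x) = map \<beta> x" if "set x \<subseteq> V H" for x
    using that \<phi>(3) by (induction x) auto
  have "bgraph_iso \<phi> (bcomp (H, c, d) (K, a, b)) (G, map \<alpha> a, map \<beta> d)"
    using \<phi>(1) m1 m2 wX wY by (simp add: P[symmetric] Let_def)
  then show ?thesis using sk_iso U by blast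
qed

lemma sk_id: "(disc (set w), w, w) \<in> C"
proof (induction w)
  case Nil then show ?case using sk_bzero N0_disc by simp
next
  case (Cons x w)
  define f where "f = (if x \<in> set w then {(0::nat, x)} else {})"
  have "(disc (insert x (set w)), map (\<lambda>_. x) [0::nat] @ map id w, map (\<lambda>_. x) [0::nat] @ map id w) \<in> C"
    by (rule sk_union_iso[OF sk_M11 Cons, where f = f and \<alpha> = "\<lambda>_. x" and \<beta> = id and G = "disc (insert x (set w))"]) (auto simp: f_def)
  then show ?case by simp
qed

lemma sk_D1: "(disc (insert x (set a)), a, x # x # a) \<in> C"
proof -
  define f where "f = (if x \<in> set a then {(0::nat, x)} else {})"
  have "(disc (insert x (set a)), map (\<lambda>_. x) ([]::nat list) @ map id a, map (\<lambda>_. x) [0::nat, 0] @ map id a) \<in> C"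
    by (rule sk_union_iso[OF sk_M02 sk_id, where f = f and \<alpha> = "\<lambda>_. x" and \<beta> = id and G = "disc (insert x (set a))"]) (auto simp: f_def)
  then show ?thesis by simp
qed

lemma sk_D2: "(disc (insert x (set b)), x # x # b, b) \<in> C"
  using sk_binv[OF sk_D1] .

lemma sk_absorb_right:
  assumes X: "(K, a, l) \<in> C" and D: "(disc T, l, d) \<in> C" and T: "T = set l"
  shows "(K, a, d) \<in> C"
proof -
  have w: "set l \<subseteq> V K" using sk_wf3[OF X] by auto
  have "(K, map id a, map id d) \<in> C"
    by (rule sk_comp_iso[OF X D _ refl]) (use w T in \<open>auto simp: same_ker_def pairs_nth\<close>)
  then show ?thesis by simp
qed

lemma sk_absorb_left:
  assumes D: "(disc T, a, l) \<in> C" and X: "(K, l, d) \<in> C" and T: "T = set l"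
  shows "(K, a, d) \<in> C"
proof -
  have w: "set l \<subseteq> V K" using sk_wf3[OF X] by auto
  have "(K, map id a, map id d) \<in> C"
    by (rule sk_comp_iso[OF D X _ refl]) (use w T in \<open>auto simp: same_ker_def pairs_nth\<close>)
  then show ?thesis by simp
qed

lemma sk_M11_left: "(K, a, b) \<in> C \<Longrightarrow> x \<in> V K \<Longrightarrow> (K, x # a, x # b) \<in> C"
proof -
  assume X: "(K, a, b) \<in> C" and x: "x \<in> V K"
  have "(K, map (\<lambda>_. x) [0::nat] @ map id a, map (\<lambda>_. x) [0::nat] @ map id b) \<in> C"
    by (rule sk_union_iso[OF sk_M11 X, where f = "{(0, x)}" and \<alpha> = "\<lambda>_. x" and \<beta> = id and G = K]) (use x in auto)
  then show ?thesis by simp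
qed

lemma sk_M02_left: "(K, a, b) \<in> C \<Longrightarrow> x \<in> V K \<Longrightarrow> (K, a, x # x # b) \<in> C"
proof -
  assume X: "(K, a, b) \<in> C" and x: "x \<in> V K"
  have "(K, map (\<lambda>_. x) ([]::nat list) @ map id a, map (\<lambda>_. x) [0::nat, 0] @ map id b) \<in> C"
    by (rule sk_union_iso[OF sk_M02 X, where f = "{(0, x)}" and \<alpha> = "\<lambda>_. x" and \<beta> = id and G = K]) (use x in auto)
  then show ?thesis by simp
qed

lemma sk_step1: "(K, x # a, b) \<in> C \<Longrightarrow> (K, a, x # b) \<in> C"
proof -
  assume X: "(K, x # a, b) \<in> C"
  have x: "x \<in> V K" using sk_wf3[OF X] by auto
  have Y: "(K, x # x # a, x # b) \<in> C" by (rule sk_M11_left[OF X x])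
  show ?thesis by (rule sk_absorb_left[OF sk_D1 Y]) simp
qed

lemma sk_step2: "(K, a, x # b) \<in> C \<Longrightarrow> (K, x # a, b) \<in> C"
proof -
  assume X: "(K, a, x # b) \<in> C"
  have x: "x \<in> V K" using sk_wf3[OF X] by auto
  have Y: "(K, x # a, x # x # b) \<in> C" by (rule sk_M11_left[OF X x])
  show ?thesis by (rule sk_absorb_right[OF Y sk_D2]) simp
qed

lemma sk_del: "(K, a, x # x # b) \<in> C \<Longrightarrow> (K, a, b) \<in> C"
  by (erule sk_absorb_right[OF _ sk_D2]) simp

lemma sk_bend: "(K, a, b) \<in> C \<longleftrightarrow> (K, [], rev a @ b) \<in> C"
proof (induction a arbitrary: b)
  case Nil then show ?case by simp
next
  case (Cons x a)
  have "(K, x # a, b) \<in> C \<longleftrightarrow> (K, a, x # b) \<in> C" using sk_step1 sk_step2 by blast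
  also have "\<dots> \<longleftrightarrow> (K, [], rev a @ x # b) \<in> C" by (rule Cons)
  finally show ?case by simp
qed

lemma sk_ins_mid: "(K, [], u @ v) \<in> C \<Longrightarrow> x \<in> V K \<Longrightarrow> (K, [], u @ x # x # v) \<in> C"
  using sk_bend[of K "rev u" v] sk_bend[of K "rev u" "x # x # v"] sk_M02_left by auto

lemma sk_del_mid: "(K, [], u @ x # x # v) \<in> C \<Longrightarrow> (K, [], u @ v) \<in> C"
  using sk_bend[of K "rev u" v] sk_bend[of K "rev u" "x # x # v"] sk_del by auto

lemma sk_red_aux: "set w \<subseteq> V K \<Longrightarrow> (K, [], u @ w) \<in> C \<longleftrightarrow> (K, [], u @ red w) \<in> C"
proof (induction w arbitrary: u)
  case Nil then show ?case by simp
next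
  case (Cons x xs)
  have x: "x \<in> V K" using Cons by simp
  have "(K, [], u @ x # xs) \<in> C \<longleftrightarrow> (K, [], (u @ [x]) @ xs) \<in> C" by simp
  also have "\<dots> \<longleftrightarrow> (K, [], (u @ [x]) @ red xs) \<in> C" using Cons.IH[where u = "u @ [x]"] Cons.prems by simp
  also have "\<dots> \<longleftrightarrow> (K, [], u @ red (x # xs)) \<in> C"
  proof (cases "red xs")
    case Nil then show ?thesis by (simp add: red_Cons cc_def)
  next
    case (Cons y ys)
    show ?thesis
    proof (cases "x = y")
      case True
      then show ?thesis using Cons sk_ins_mid[OF _ x, where u = u and v = ys] sk_del_mid[where K = K and u = u and x = x and v = ys]
        by (auto simp: red_Cons cc_def)
    next
      case False then show ?thesis using Cons by (simp add: red_Cons cc_def)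
    qed
  qed
  finally show ?case .
qed

lemma sk_red: "set w \<subseteq> V K \<Longrightarrow> set w' \<subseteq> V K \<Longrightarrow> red w = red w' \<Longrightarrow>
    (K, [], w) \<in> C \<longleftrightarrow> (K, [], w') \<in> C"
  using sk_red_aux[where w = w and K = K and u = "[]"] sk_red_aux[where w = w' and K = K and u = "[]"] by simp

lemma sk_prod: "(K, [], a) \<in> C \<Longrightarrow> (K, [], b) \<in> C \<Longrightarrow> (K, [], a @ b) \<in> C"
proof -
  assume X: "(K, [], a) \<in> C" and Y: "(K, [], b) \<in> C"
  have "(K, map id [] @ map id [], map id a @ map id b) \<in> C"
    by (rule sk_union_iso[OF X Y, where f = "Id_on (V K)" and \<alpha> = id and \<beta> = id and G = K]) auto
  then show ?thesis by simp
qed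

lemma sk_conj: "(K, [], h) \<in> C \<Longrightarrow> set v \<subseteq> V K \<Longrightarrow> (K, [], v @ h @ rev v) \<in> C"
proof -
  assume X: "(K, [], h) \<in> C" and v: "set v \<subseteq> V K"
  have "(K, map id [] @ map id (rev v), map id h @ map id (rev v)) \<in> C"
    by (rule sk_union_iso[OF X sk_id, where f = "Id_on (set v)" and \<alpha> = id and \<beta> = id and G = K]) (use v in auto)
  then have "(K, rev v, h @ rev v) \<in> C" by simp
  then show ?thesis using sk_bend[of K "rev v" "h @ rev v"] by simp
qed

lemma sk_inv: "(K, [], h) \<in> C \<Longrightarrow> (K, [], rev h) \<in> C"
  using sk_binv[of K "[]" h] sk_bend[of K h "[]"] by simp

end




lemma gw_nil[simp]: "gw [] = []" by (simp add: gw_def)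
lemma gA: "gmul (ginv (gw a)) (gw b) = red (rev a @ b)"
  by (simp add: gmul_def ginv_def gw_def)
lemma gB: "gmul (gw b) (ginv (gw a)) = red (b @ rev a)"
  by (simp add: gmul_def ginv_def gw_def)

lemma pair_set_eqI: assumes h: "\<And>K g. (K, g) \<in> A \<longleftrightarrow> (K, g) \<in> B" shows "A = B"
proof (intro subset_antisym subrelI)
  fix K g assume "(K, g) \<in> A" then show "(K, g) \<in> B" using h by blast
next
  fix K g assume "(K, g) \<in> B" then show "(K, g) \<in> A" using h by blast
qed

lemma triple_set_eqI: assumes h: "\<And>K a b. (K, a, b) \<in> A \<longleftrightarrow> (K, a, b) \<in> B" shows "A = B"
proof (intro subset_antisym subrelI)
  fix K y assume "(K, y) \<in> A" then show "(K, y) \<in> B" using h[of K "fst y" "snd y"] by simp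
next
  fix K y assume "(K, y) \<in> B" then show "(K, y) \<in> A" using h[of K "fst y" "snd y"] by simp
qed

lemma F_of_mem0: "(K, g) \<in> F_of C \<longleftrightarrow> (\<exists>a b. (K, a, b) \<in> C \<and> g = red (rev a @ b))"
  unfolding F_of_def gA by blast

lemma C_of_mem: "(K, a, b) \<in> C_of F \<longleftrightarrow> wf_bgraph (K, a, b) \<and> (K, red (rev a @ b)) \<in> F"
  by (simp add: C_of_def gA)

lemma graph_iso_inv:
  assumes "graph_iso \<phi> K K" "wf_graph K"
  shows "graph_iso (inv_into (V K) \<phi>) K K \<and> (\<forall>v\<in>V K. \<phi> (inv_into (V K) \<phi> v) = v)"
proof -
  have b: "bij_betw \<phi> (V K) (V K)" and e: "image \<phi> ` E K = E K" using assms(1) by (auto simp: graph_iso_def)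
  have bi: "bij_betw (inv_into (V K) \<phi>) (V K) (V K)" using b by (rule bij_betw_inv_into)
  have c: "inv_into (V K) \<phi> ` \<phi> ` x = x" if "x \<in> E K" for x
  proof -
    have "x \<subseteq> V K" using assms(2) that by (auto simp: wf_graph_def)
    then show ?thesis using b by (simp add: bij_betw_def inv_into_image_cancel)
  qed
  have "image (inv_into (V K) \<phi>) ` E K = image (inv_into (V K) \<phi>) ` image \<phi> ` E K" using e by simp
  also have "\<dots> = (\<lambda>e. inv_into (V K) \<phi> ` \<phi> ` e) ` E K" by (simp add: image_image)
  also have "\<dots> = (\<lambda>e. e) ` E K" by (rule image_cong[OF refl]) (rule c)
  also have "\<dots> = E K" by simp
  finally have "image (inv_into (V K) \<phi>) ` E K = E K" .
  moreover have "\<forall>v\<in>V K. \<phi> (inv_into (V K) \<phi> v) = v"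
    using b by (simp add: bij_betw_def f_inv_into_f)
  ultimately show ?thesis using bi by (simp add: graph_iso_def)
qed

lemma rep_iso: "gfam_rep F \<Longrightarrow> (K, a) \<in> F \<Longrightarrow> graph_iso \<phi> K K' \<Longrightarrow> (K', gmap \<phi> a) \<in> F"
  unfolding gfam_rep_def by blast

lemma rep_wf: assumes "gfam_rep F" "(K, a) \<in> F" shows "wf_graph K \<and> set a \<subseteq> V K \<and> red a = a"
proof -
  have "case (K, a) of (K, a) \<Rightarrow> wf_graph K \<and> a \<in> carrier (Z2F (V K))"
    using assms unfolding gfam_rep_def by blast
  then show ?thesis by (simp add: carrier_Z2F)
qed

lemma rep_F2:
  assumes rep: "gfam_rep F" and wf: "wf_graph K" and iso: "graph_iso \<phi> K K"
  shows "gmap \<phi> ` Fib F K = Fib F K"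
proof
  show "gmap \<phi> ` Fib F K \<subseteq> Fib F K"
  proof
    fix y assume "y \<in> gmap \<phi> ` Fib F K"
    then obtain w where "(K, w) \<in> F" "y = gmap \<phi> w" by (auto simp: Fib_def)
    then show "y \<in> Fib F K" using rep_iso[OF rep _ iso] by (simp add: Fib_def)
  qed
  show "Fib F K \<subseteq> gmap \<phi> ` Fib F K"
  proof
    fix w assume w: "w \<in> Fib F K"
    define \<psi> where "\<psi> = inv_into (V K) \<phi>"
    have psi: "graph_iso \<psi> K K" "\<forall>v\<in>V K. \<phi> (\<psi> v) = v" using graph_iso_inv[OF iso wf] by (simp_all add: \<psi>_def)
    have wK: "(K, w) \<in> F" using w by (simp add: Fib_def)
    have wc: "set w \<subseteq> V K" "red w = w" using rep_wf[OF rep wK] by auto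
    have "gmap \<psi> w \<in> Fib F K" using rep_iso[OF rep wK psi(1)] by (simp add: Fib_def)
    moreover have "gmap \<phi> (gmap \<psi> w) = w"
    proof -
      have "gmap \<phi> (gmap \<psi> w) = gmap (\<phi> \<circ> \<psi>) w" by (rule gmap_comp)
      also have "\<dots> = gmap (\<lambda>x. x) w" by (rule gmap_cong) (use psi(2) wc in auto)
      also have "\<dots> = w" using wc by (simp add: gmap_def)
      finally show ?thesis .
    qed
    ultimately show "w \<in> gmap \<phi> ` Fib F K" by force
  qed
qed

context
  fixes C assumes sk: "skew_graph_category C"
begin

lemma F_of_mem: "(K, g) \<in> F_of C \<longleftrightarrow> (\<exists>w. (K, [], w) \<in> C \<and> g = red w)"
proof
  assume "(K, g) \<in> F_of C"
  then obtain a b where "(K, a, b) \<in> C" "g = red (rev a @ b)" by (auto simp: F_of_mem0)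
  then show "\<exists>w. (K, [], w) \<in> C \<and> g = red w" using sk_bend[OF sk] by blast
next
  assume "\<exists>w. (K, [], w) \<in> C \<and> g = red w"
  then show "(K, g) \<in> F_of C" unfolding F_of_mem0 by (metis append_Nil rev.simps(1))
qed

lemma F_of_third: "F_of C = {(K, gw a) | K a. (K, [], a) \<in> C}"
proof -
  have "(K, g) \<in> F_of C \<longleftrightarrow> (K, g) \<in> {(K, gw a) | K a. (K, [], a) \<in> C}" for K g
    unfolding gw_def F_of_mem by blast
  then show ?thesis by (rule pair_set_eqI)
qed

lemma Fib_F_of: "Fib (F_of C) K = {w. (K, [], w) \<in> C \<and> red w = w}"
proof -
  have "(\<exists>w'. (K, [], w') \<in> C \<and> w = red w') \<longleftrightarrow> (K, [], w) \<in> C \<and> red w = w" for w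
  proof
    assume "\<exists>w'. (K, [], w') \<in> C \<and> w = red w'"
    then obtain w' where w': "(K, [], w') \<in> C" "w = red w'" by blast
    have s1: "set w' \<subseteq> V K" using sk_wf3[OF sk w'(1)] by simp
    have s2: "set (red w') \<subseteq> V K" using s1 set_red by blast
    have "(K, [], red w') \<in> C" using sk_red[OF sk s1 s2] w'(1) by simp
    then show "(K, [], w) \<in> C \<and> red w = w" using w' by simp
  qed (metis)
  then show ?thesis unfolding Fib_def F_of_mem by blast
qed

lemma F_of_second: "{(K, gmul (gw b) (ginv (gw a))) | K a b. (K, a, b) \<in> C} = F_of C"
proof -
  have "(K, g) \<in> {(K, gmul (gw b) (ginv (gw a))) | K a b. (K, a, b) \<in> C} \<longleftrightarrow> (K, g) \<in> F_of C"
    for K g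
  proof
    assume "(K, g) \<in> {(K, gmul (gw b) (ginv (gw a))) | K a b. (K, a, b) \<in> C}"
    then obtain a b where ab: "(K, a, b) \<in> C" "g = red (b @ rev a)" by (auto simp: gB)
    have w: "set a \<subseteq> V K" "set b \<subseteq> V K" using sk_wf3[OF sk ab(1)] by auto
    have "(K, [], rev a @ b) \<in> C" using ab sk_bend[OF sk] by blast
    then have "(K, [], b @ (rev a @ b) @ rev b) \<in> C" using sk_conj[OF sk] w by blast
    moreover have "red (b @ (rev a @ b) @ rev b) = red (b @ rev a)"
      using red_cancel_word[of "b @ rev a" b "[]"] by simp
    moreover have "set (b @ (rev a @ b) @ rev b) \<subseteq> V K" "set (b @ rev a) \<subseteq> V K" using w by auto
    ultimately have "(K, [], b @ rev a) \<in> C" using sk_red[OF sk] by blast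
    then show "(K, g) \<in> F_of C" using F_of_mem ab by blast
  next
    assume "(K, g) \<in> F_of C"
    then obtain w where "(K, [], w) \<in> C" "g = red w" using F_of_mem by blast
    then have "(K, g) = (K, gmul (gw w) (ginv (gw []))) \<and> (K, [], w) \<in> C"
      by (simp add: gmul_def ginv_def gw_def)
    then show "(K, g) \<in> {(K, gmul (gw b) (ginv (gw a))) | K a b. (K, a, b) \<in> C}"
      by blast
  qed
  then show ?thesis by (rule pair_set_eqI)
qed

lemma rep_F_of: "gfam_rep (F_of C)"
  unfolding gfam_rep_def
proof (intro conjI allI impI ballI)
  fix x assume "x \<in> F_of C"
  obtain K g where x: "x = (K, g)" by (cases x)
  then have "(K, g) \<in> F_of C" using \<open>x \<in> F_of C\<close> by simp
  then obtain w where w: "(K, [], w) \<in> C" "g = red w" using F_of_mem by blast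
  have "wf_graph K" "set w \<subseteq> V K" using sk_wf3[OF sk w(1)] by auto
  moreover have "set g \<subseteq> set w" "red g = g" using w set_red[of w] by auto
  ultimately have "wf_graph K \<and> g \<in> carrier (Z2F (V K))" unfolding carrier_Z2F by blast
  then show "case x of (K, a) \<Rightarrow> wf_graph K \<and> a \<in> carrier (Z2F (V K))"
    unfolding x by simp
next
  fix K K' \<phi> a assume a: "(K, a) \<in> F_of C" and iso: "graph_iso \<phi> K K'"
  then obtain w where w: "(K, [], w) \<in> C" "a = red w" using F_of_mem by blast
  have "bgraph_iso \<phi> (K, [], w) (K', [], map \<phi> w)" using iso by simp
  then have "(K', [], map \<phi> w) \<in> C" using sk_iso[OF sk w(1)] by blast
  moreover have "gmap \<phi> a = red (map \<phi> w)" using w by (simp add: gmap_def)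
  ultimately show "(K', gmap \<phi> a) \<in> F_of C" unfolding F_of_mem by blast
qed

lemma fib_F_of: "graph_fibration (F_of C)"
  unfolding graph_fibration_def
proof (intro conjI allI impI)
  show "gfam_rep (F_of C)" by (rule rep_F_of)
  show "(N0, []) \<in> F_of C" using F_of_mem sk_bzero[OF sk] by fastforce
  have "red [0::nat, 0] = []" by (simp add: red_Cons cc_def)
  then show "(N1, []) \<in> F_of C" using F_of_mem sk_M02[OF sk] by (metis M_def N1_def)
next
  fix K assume wf: "wf_graph K"
  show "Fib (F_of C) K = {} \<or> Fib (F_of C) K \<lhd> Z2F (V K)"
  proof (cases "Fib (F_of C) K = {}")
    case False
    then obtain w0 where w0: "(K, [], w0) \<in> C" using Fib_F_of by auto
    have sub: "set w \<subseteq> V K" if "(K, [], w) \<in> C" for w using sk_wf3[OF sk that] by auto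
    have redc: "(K, [], red w) \<in> C" if "(K, [], w) \<in> C" for w
    proof -
      have s: "set (red w) \<subseteq> V K" using set_red sub[OF that] by blast
      show ?thesis using sk_red[OF sk sub[OF that] s] that by simp
    qed
    have "Fib (F_of C) K \<lhd> Z2F (V K)"
      unfolding normal_Z2F_iff Fib_F_of
    proof (intro conjI ballI)
      show "{w. (K, [], w) \<in> C \<and> red w = w} \<subseteq> carrier (Z2F (V K))"
        using sub by (auto simp: carrier_Z2F)
      have "(K, [], w0 @ rev w0) \<in> C" using sk_prod[OF sk w0 sk_inv[OF sk w0]] .
      then show "[] \<in> {w. (K, [], w) \<in> C \<and> red w = w}" using redc by fastforce
    next
      fix x y assume "x \<in> {w. (K, [], w) \<in> C \<and> red w = w}" "y \<in> {w. (K, [], w) \<in> C \<and> red w = w}"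
      then show "red (x @ y) \<in> {w. (K, [], w) \<in> C \<and> red w = w}"
        using sk_prod[OF sk] redc by auto
    next
      fix x assume "x \<in> {w. (K, [], w) \<in> C \<and> red w = w}"
      then show "red (rev x) \<in> {w. (K, [], w) \<in> C \<and> red w = w}"
        using sk_inv[OF sk] redc by auto
    next
      fix x h assume x: "x \<in> carrier (Z2F (V K))" and h: "h \<in> {w. (K, [], w) \<in> C \<and> red w = w}"
      then show "red (x @ h @ rev x) \<in> {w. (K, [], w) \<in> C \<and> red w = w}"
        using sk_conj[OF sk] redc by (auto simp: carrier_Z2F)
    qed
    then show ?thesis by blast
  qed simp
next
  fix K \<phi> assume "wf_graph K" "graph_iso \<phi> K K"
  then show "gmap \<phi> ` Fib (F_of C) K = Fib (F_of C) K" using rep_F2[OF rep_F_of] by blast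
next
  fix K a H b f assume a: "(K, a) \<in> F_of C" and b: "(H, b) \<in> F_of C" and ov: "vertex_overlap K H f"
  obtain w1 where w1: "(K, [], w1) \<in> C" "a = red w1" using a F_of_mem by blast
  obtain w2 where w2: "(H, [], w2) \<in> C" "b = red w2" using b F_of_mem by blast
  have "bfunion (K, [], w1) f (H, [], w2) \<in> C" by (rule sk_union[OF sk w1(1) w2(1) ov])
  then have "(glue K H f, [], map (glK K H f) w1 @ map (glH K H f) w2) \<in> C" by simp
  moreover have "gmul (gmap (glK K H f) a) (gmap (glH K H f) b) = red (map (glK K H f) w1 @ map (glH K H f) w2)"
    using w1 w2 by (simp add: gmul_def gmap_def)
  ultimately show "(glue K H f, gmul (gmap (glK K H f) a) (gmap (glH K H f) b)) \<in> F_of C"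
    unfolding F_of_mem by blast
qed

lemma C_of_F_of: "C_of (F_of C) = C"
proof -
  have "(K, a, b) \<in> C_of (F_of C) \<longleftrightarrow> (K, a, b) \<in> C" for K a b
  proof
    assume "(K, a, b) \<in> C_of (F_of C)"
    then have wf: "wf_bgraph (K, a, b)" and "(K, red (rev a @ b)) \<in> F_of C" by (auto simp: C_of_mem)
    then obtain w where w: "(K, [], w) \<in> C" "red (rev a @ b) = red w" using F_of_mem by blast
    have "set w \<subseteq> V K" using sk_wf3[OF sk w(1)] by simp
    moreover have "set (rev a @ b) \<subseteq> V K" using wf by simp
    ultimately have "(K, [], rev a @ b) \<in> C" using sk_red[OF sk] w by blast
    then show "(K, a, b) \<in> C" using sk_bend[OF sk] by blast
  next
    assume X: "(K, a, b) \<in> C"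
    then have "(K, [], rev a @ b) \<in> C" using sk_bend[OF sk] by blast
    then show "(K, a, b) \<in> C_of (F_of C)" using X sk_wf[OF sk X] F_of_mem unfolding C_of_mem by blast
  qed
  then show ?thesis by (rule triple_set_eqI)
qed

end




lemma wf_N0: "wf_graph N0" by (simp add: wf_graph_def N0_def)
lemma wf_M: "wf_graph M" by (simp add: wf_graph_def M_def)
lemma M_N1: "M = N1" by (simp add: M_def N1_def)
lemma red00: "red [x, x] = []" by (simp add: red_Cons cc_def)

lemma glue_rel_mem: "(v, w) \<in> P \<Longrightarrow> (inlv v, inrv w) \<in> glue_rel K H P"
  unfolding glue_rel_def eqcl_def by (rule r_into_trancl) auto

lemma glue_same:
  assumes P: "P \<subseteq> V K \<times> V H" and vw: "(v, w) \<in> P" and fin: "wf_graph K" "wf_graph H"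
  shows "glK K H P v = glH K H P w"
  unfolding glK_def glH_def comp_def
  by (rule qmap_eq[OF glue_rel_equiv[OF P] glue_rel_mem[OF vw]])

context
  fixes F assumes gf: "graph_fibration F"
begin

lemma gf_rep: "gfam_rep F" using gf by (simp add: graph_fibration_def)
lemma gf_wf: "(K, x) \<in> F \<Longrightarrow> wf_graph K \<and> set x \<subseteq> V K \<and> red x = x"
  by (rule rep_wf[OF gf_rep])
lemma gf_N0: "(N0, []) \<in> F" using gf by (simp add: graph_fibration_def)
lemma gf_N1: "(N1, []) \<in> F" using gf by (simp add: graph_fibration_def)
lemma gf_F3: "(K, a) \<in> F \<Longrightarrow> (H, b) \<in> F \<Longrightarrow> vertex_overlap K H f \<Longrightarrow>
        (glue K H f, gmul (gmap (glK K H f) a) (gmap (glH K H f) b)) \<in> F"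
  using gf unfolding graph_fibration_def by blast

lemma gf_normal: assumes "(K, x) \<in> F" shows "Fib F K \<lhd> Z2F (V K)"
proof -
  have "wf_graph K" using gf_wf[OF assms] by simp
  moreover have "Fib F K \<noteq> {}" using assms by (auto simp: Fib_def)
  ultimately show ?thesis using gf unfolding graph_fibration_def by blast
qed

lemma gf_one: "(K, x) \<in> F \<Longrightarrow> (K, []) \<in> F"
  using gf_normal unfolding normal_Z2F_iff by (simp add: Fib_def)

lemma gf_mul: "(K, x) \<in> F \<Longrightarrow> (K, y) \<in> F \<Longrightarrow> (K, red (x @ y)) \<in> F"
  using gf_normal unfolding normal_Z2F_iff by (simp add: Fib_def)

lemma gf_inv: "(K, x) \<in> F \<Longrightarrow> (K, red (rev x)) \<in> F"
  using gf_normal unfolding normal_Z2F_iff by (simp add: Fib_def)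

lemma gf_conj: assumes h: "(K, h) \<in> F" and v: "set v \<subseteq> V K"
  shows "(K, red (v @ h @ rev v)) \<in> F"
proof -
  have c: "red v \<in> carrier (Z2F (V K))" using v set_red[of v] by (auto simp: carrier_Z2F)
  have N: "\<forall>x\<in>carrier (Z2F (V K)). \<forall>h\<in>Fib F K. red (x @ h @ rev x) \<in> Fib F K"
    using gf_normal[OF h] unfolding normal_Z2F_iff by blast
  have hF: "h \<in> Fib F K" using h by (simp add: Fib_def)
  have "red (red v @ h @ rev (red v)) \<in> Fib F K" using N c hF by blast
  then have "(K, red (red v @ h @ rev (red v))) \<in> F" by (simp only: Fib_def mem_Collect_eq)
  moreover have "red (red v @ h @ rev (red v)) = red (v @ h @ rev v)"
    using red_app_rev2[of "v @ h" v] by simp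
  ultimately show ?thesis by simp
qed

lemma C_of_alt: "C_of F = {(K, a, b). wf_bgraph (K, a, b) \<and> (K, gmul (gw b) (ginv (gw a))) \<in> F}"
proof (rule triple_set_eqI)
  fix K a b
  have "wf_bgraph (K, a, b) \<Longrightarrow> (K, red (rev a @ b)) \<in> F \<longleftrightarrow> (K, red (b @ rev a)) \<in> F"
  proof -
    assume w: "wf_bgraph (K, a, b)"
    then have sa: "set a \<subseteq> V K" and sb: "set b \<subseteq> V K" by auto
    show ?thesis
    proof
      assume "(K, red (rev a @ b)) \<in> F"
      from gf_conj[OF this sb] have "(K, red (b @ red (rev a @ b) @ rev b)) \<in> F" .
      moreover have "red (b @ red (rev a @ b) @ rev b) = red (b @ rev a)"
        using red_cancel_word[of "b @ rev a" b "[]"] by simp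
      ultimately show "(K, red (b @ rev a)) \<in> F" by simp
    next
      assume "(K, red (b @ rev a)) \<in> F"
      moreover have "set (rev a) \<subseteq> V K" using sa by simp
      ultimately have "(K, red (rev a @ red (b @ rev a) @ rev (rev a))) \<in> F" by (rule gf_conj)
      moreover have "red (rev a @ red (b @ rev a) @ rev (rev a)) = red (rev a @ b)"
        using red_cancel_word'[of "rev a @ b" a "[]"] by simp
      ultimately show "(K, red (rev a @ b)) \<in> F" by simp
    qed
  qed
  then show "(K, a, b) \<in> C_of F \<longleftrightarrow> (K, a, b) \<in> {(K, a, b). wf_bgraph (K, a, b) \<and> (K, gmul (gw b) (ginv (gw a))) \<in> F}"
    unfolding C_of_mem gB mem_Collect_eq case_prod_conv by blast
qed

lemma C_of_wf: "(K, a, b) \<in> C_of F \<Longrightarrow> wf_graph K \<and> set a \<subseteq> V K \<and> set b \<subseteq> V K"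
  by (simp add: C_of_mem)

lemma C_of_el: "(K, a, b) \<in> C_of F \<Longrightarrow> (K, red (rev a @ b)) \<in> F"
  by (simp add: C_of_mem)

lemma skew_C_of: "skew_graph_category (C_of F)"
  unfolding skew_graph_category_def
proof (intro conjI allI impI ballI)
  show "bset_rep (C_of F)"
    unfolding bset_rep_def
  proof (intro conjI allI impI ballI)
    fix X assume "X \<in> C_of F" then show "wf_bgraph X" by (auto simp: C_of_def)
  next
    fix X Y \<phi> assume X: "X \<in> C_of F" and iso: "bgraph_iso \<phi> X Y"
    obtain K a b where Xe: "X = (K, a, b)" by (cases X)
    obtain K' a' b' where Ye: "Y = (K', a', b')" by (cases Y)
    have i: "graph_iso \<phi> K K'" "a' = map \<phi> a" "b' = map \<phi> b" using iso Xe Ye by auto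
    have el: "(K, red (rev a @ b)) \<in> F" using X Xe C_of_el by simp
    have "(K', gmap \<phi> (red (rev a @ b))) \<in> F" by (rule rep_iso[OF gf_rep el i(1)])
    then have el': "(K', red (rev a' @ b')) \<in> F" using i by (simp add: gmap_def rev_map)
    have wK: "wf_graph K \<and> set a \<subseteq> V K \<and> set b \<subseteq> V K" using X Xe C_of_wf by simp
    have "\<phi> ` V K = V K'" using i(1) by (simp add: graph_iso_def bij_betw_def)
    then have "set a' \<subseteq> V K'" "set b' \<subseteq> V K'" using wK i by auto
    moreover have "wf_graph K'" using gf_wf[OF el'] by simp
    ultimately show "Y \<in> C_of F" using el' Ye by (simp add: C_of_mem)
  qed
next
  show "bzero \<in> C_of F" using gf_N0 wf_N0 by (simp add: bzero_def C_of_mem N0_def)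
next
  show "M11 \<in> C_of F" using gf_N1 wf_M by (simp add: M11_def C_of_mem M_N1 red00 N1_def)
next
  show "M02 \<in> C_of F" using gf_N1 wf_M by (simp add: M02_def C_of_mem M_N1 red00 N1_def)
next
  fix X assume X: "X \<in> C_of F"
  obtain K a b where Xe: "X = (K, a, b)" by (cases X)
  have el: "(K, red (rev a @ b)) \<in> F" using X Xe C_of_el by simp
  have "(K, red (rev (red (rev a @ b)))) \<in> F" by (rule gf_inv[OF el])
  then have "(K, red (rev b @ a)) \<in> F" by simp
  then show "binv X \<in> C_of F" using X Xe by (simp add: C_of_mem)
next
  fix K a b H c d f
  assume X: "(K, a, b) \<in> C_of F" and Y: "(H, c, d) \<in> C_of F" and ov: "vertex_overlap K H f"
  define G where "G = glue K H f"
  define fK where "fK = glK K H f"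
  define fH where "fH = glH K H f"
  have wK: "wf_graph K" "set a \<subseteq> V K" "set b \<subseteq> V K" using C_of_wf[OF X] by auto
  have wH: "wf_graph H" "set c \<subseteq> V H" "set d \<subseteq> V H" using C_of_wf[OF Y] by auto
  have x: "(K, red (rev a @ b)) \<in> F" and y: "(H, red (rev c @ d)) \<in> F" using X Y C_of_el by auto
  have "(G, gmul (gmap fK (red (rev a @ b))) (gmap fH [])) \<in> F"
    unfolding G_def fK_def fH_def by (rule gf_F3[OF x gf_one[OF y] ov])
  then have X': "(G, red (rev (map fK a) @ map fK b)) \<in> F" by (simp add: gmul_def gmap_def rev_map)
  have "(G, gmul (gmap fK []) (gmap fH (red (rev c @ d)))) \<in> F"
    unfolding G_def fK_def fH_def by (rule gf_F3[OF gf_one[OF x] y ov])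
  then have Y': "(G, red (rev (map fH c) @ map fH d)) \<in> F" by (simp add: gmul_def gmap_def rev_map)
  have sC: "set (rev (map fH c)) \<subseteq> V G" using wH glH_in[where K=K and H=H and f=f] unfolding G_def fH_def by auto
  have "(G, red (rev (map fH c) @ red (rev (map fK a) @ map fK b) @ rev (rev (map fH c)))) \<in> F"
    by (rule gf_conj[OF X' sC])
  from gf_mul[OF this Y']
  have "(G, red (rev (map fH c) @ rev (map fK a) @ map fK b @ map fH c @ rev (map fH c) @ map fH d)) \<in> F"
    by simp
  moreover have "red (rev (map fH c) @ rev (map fK a) @ map fK b @ map fH c @ rev (map fH c) @ map fH d)
      = red (rev (map fH c) @ rev (map fK a) @ map fK b @ map fH d)"
    using red_cancel_word[of "rev (map fH c) @ rev (map fK a) @ map fK b" "map fH c" "map fH d"] by simp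
  ultimately have el: "(G, red (rev (map fK a @ map fH c) @ (map fK b @ map fH d))) \<in> F" by simp
  have wG: "wf_graph G" unfolding G_def by (rule wf_glue[OF wK(1) wH(1)])
  have sets: "set (map fK a @ map fH c) \<subseteq> V G" "set (map fK b @ map fH d) \<subseteq> V G"
    using wK wH glK_in[where K=K and H=H and f=f] glH_in[where K=K and H=H and f=f] unfolding G_def fK_def fH_def by auto
  show "bfunion (K, a, b) f (H, c, d) \<in> C_of F"
    using el wG sets by (simp add: C_of_mem G_def fK_def fH_def)
next
  fix K a b H c d
  assume X: "(K, a, b) \<in> C_of F" and Y: "(H, c, d) \<in> C_of F" and sk': "same_ker b c"
  define P where "P = {(b ! i, c ! i) | i. i < length b}"
  define G where "G = glue K H P"
  define fK where "fK = glK K H P"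
  define fH where "fH = glH K H P"
  have wK: "wf_graph K" "set a \<subseteq> V K" "set b \<subseteq> V K" using C_of_wf[OF X] by auto
  have wH: "wf_graph H" "set c \<subseteq> V H" "set d \<subseteq> V H" using C_of_wf[OF Y] by auto
  have lbc: "length b = length c" using sk' by (simp add: same_ker_def)
  have Psub: "P \<subseteq> V K \<times> V H" unfolding P_def using wK wH lbc by (auto simp: nth_mem subsetD)
  have ov: "vertex_overlap K H P"
    unfolding vertex_overlap_def
  proof (intro conjI Psub ballI, clarify)
    fix v w v' w' assume "(v, w) \<in> P" "(v', w') \<in> P"
    then obtain i j where "i < length b" "j < length b" "v = b ! i" "w = c ! i" "v' = b ! j" "w' = c ! j"
      unfolding P_def by blast
    then show "v = v' \<longleftrightarrow> w = w'" using sk' by (simp add: same_ker_def)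
  qed
  have x: "(K, red (rev a @ b)) \<in> F" and y: "(H, red (rev c @ d)) \<in> F" using X Y C_of_el by auto
  have "(G, gmul (gmap fK (red (rev a @ b))) (gmap fH (red (rev c @ d)))) \<in> F"
    unfolding G_def fK_def fH_def by (rule gf_F3[OF x y ov])
  then have el0: "(G, red (rev (map fK a) @ map fK b @ rev (map fH c) @ map fH d)) \<in> F"
    by (simp add: gmul_def gmap_def rev_map)
  have bc: "map fK b = map fH c"
  proof (rule nth_equalityI)
    show "length (map fK b) = length (map fH c)" using lbc by simp
    fix i assume "i < length (map fK b)"
    then have "(b ! i, c ! i) \<in> P" unfolding P_def by auto
    then show "map fK b ! i = map fH c ! i" using \<open>i < length (map fK b)\<close> lbc
      glue_same[OF Psub _ wK(1) wH(1)] by (simp add: fK_def fH_def)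
  qed
  have "red (rev (map fK a) @ map fK b @ rev (map fK b) @ map fH d) = red (rev (map fK a) @ map fH d)"
    using red_cancel_word[of "rev (map fK a)" "map fK b" "map fH d"] by simp
  then have el: "(G, red (rev (map fK a) @ map fH d)) \<in> F" using el0 bc by simp
  have wG: "wf_graph G" unfolding G_def by (rule wf_glue[OF wK(1) wH(1)])
  have sets: "set (map fK a) \<subseteq> V G" "set (map fH d) \<subseteq> V G"
    using wK wH glK_in[where K=K and H=H and f=P] glH_in[where K=K and H=H and f=P] unfolding G_def fK_def fH_def by auto
  show "bcomp (H, c, d) (K, a, b) \<in> C_of F"
    using el wG sets by (simp add: C_of_mem G_def fK_def fH_def P_def[symmetric] Let_def)
qed

lemma F_of_C_of: "F_of (C_of F) = F"
proof (rule pair_set_eqI)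
  fix K g
  show "(K, g) \<in> F_of (C_of F) \<longleftrightarrow> (K, g) \<in> F"
  proof
    assume "(K, g) \<in> F_of (C_of F)"
    then obtain a b where "(K, a, b) \<in> C_of F" "g = red (rev a @ b)" unfolding F_of_mem0 by blast
    then show "(K, g) \<in> F" using C_of_el by simp
  next
    assume g: "(K, g) \<in> F"
    then have "wf_graph K \<and> set g \<subseteq> V K \<and> red g = g" by (rule gf_wf)
    then have "(K, [], g) \<in> C_of F \<and> g = red (rev [] @ g)" using g by (simp add: C_of_mem)
    then show "(K, g) \<in> F_of (C_of F)" unfolding F_of_mem0 by blast
  qed
qed

lemma gt_easy: "group_theoretical (C_of F) \<Longrightarrow> easy_fibration F"
  unfolding easy_fibration_def
proof (intro conjI gf allI impI subsetI)
  assume gt: "group_theoretical (C_of F)"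
  fix K R y assume ne: "Fib F K \<noteq> {}" and eq: "equiv (V K) R" and y: "y \<in> gmap (qmap R) ` Fib F K"
  then obtain w where w: "(K, w) \<in> F" "y = gmap (qmap R) w" by (auto simp: Fib_def)
  have "wf_graph K \<and> set w \<subseteq> V K \<and> red w = w" by (rule gf_wf[OF w(1)])
  then have "(K, [], w) \<in> C_of F" using w by (simp add: C_of_mem)
  then have "bquot R (K, [], w) \<in> C_of F" using gt eq unfolding group_theoretical_def by blast
  then have "(gquot R K, red (map (qmap R) w)) \<in> F" by (simp add: C_of_mem)
  then show "y \<in> Fib F (gquot R K)" using w by (simp add: Fib_def gmap_def)
qed

lemma C_of_quot: assumes ez: "easy_fibration F" and X: "(K, a, b) \<in> C_of F" and eq: "equiv (V K) R"
  shows "(gquot R K, map (qmap R) a, map (qmap R) b) \<in> C_of F"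
proof -
  have el: "(K, red (rev a @ b)) \<in> F" using C_of_el[OF X] .
  have w: "wf_graph K" "set a \<subseteq> V K" "set b \<subseteq> V K" using C_of_wf[OF X] by auto
  have "Fib F K \<noteq> {}" using el by (auto simp: Fib_def)
  then have "gmap (qmap R) ` Fib F K \<subseteq> Fib F (gquot R K)" using ez eq unfolding easy_fibration_def by blast
  moreover have "red (rev a @ b) \<in> Fib F K" using el by (simp add: Fib_def)
  ultimately have "(gquot R K, gmap (qmap R) (red (rev a @ b))) \<in> F" by (auto simp: Fib_def)
  then have "(gquot R K, red (rev (map (qmap R) a) @ map (qmap R) b)) \<in> F" by (simp add: gmap_def rev_map)
  moreover have "wf_graph (gquot R K)" by (rule wf_gquot[OF w(1)])
  moreover have "set (map (qmap R) a) \<subseteq> V (gquot R K)" "set (map (qmap R) b) \<subseteq> V (gquot R K)"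
    using w by (auto simp: gquot_def)
  ultimately show ?thesis by (simp add: C_of_mem)
qed

lemma union_dunion: assumes X: "(K, a, b) \<in> C_of F" and Y: "(H, c, d) \<in> C_of F"
  shows "(dunion K H, map inlv a @ map inrv c, map inlv b @ map inrv d) \<in> C_of F"
  by (rule sk_union_iso[OF skew_C_of X Y, where f = "{}" and \<alpha> = inlv and \<beta> = inrv])
     (auto simp: inj_on_def V_dunion dunion_def)

lemma easy_gt: assumes ez: "easy_fibration F" shows "group_theoretical (C_of F)"
proof -
  have sk: "skew_graph_category (C_of F)" by (rule skew_C_of)
  have gc: "graph_category (C_of F)"
    unfolding graph_category_def
  proof (intro conjI ballI impI)
    show "bset_rep (C_of F)" "M11 \<in> C_of F" "M02 \<in> C_of F" "bzero \<in> C_of F"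
      using sk by (simp_all add: skew_graph_category_def)
  next
    fix X assume "X \<in> C_of F" then show "binv X \<in> C_of F" using sk by (simp add: skew_graph_category_def)
  next
    fix X Y assume X: "X \<in> C_of F" and Y: "Y \<in> C_of F"
    obtain K a b where Xe: "X = (K, a, b)" by (cases X)
    obtain H c d where Ye: "Y = (H, c, d)" by (cases Y)
    show "btensor X Y \<in> C_of F" using union_dunion X Y Xe Ye by simp
  next
    fix X Y assume X: "X \<in> C_of F" and Y: "Y \<in> C_of F" and l: "length (outputs X) = length (inputs Y)"
    obtain K a b where Xe: "X = (K, a, b)" by (cases X)
    obtain H c d where Ye: "Y = (H, c, d)" by (cases Y)
    have X': "(K, a, b) \<in> C_of F" and Y': "(H, c, d) \<in> C_of F" using X Y Xe Ye by auto
    have lbc: "length b = length c" using l Xe Ye by simp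
    define P where "P = {(b ! i, c ! i) | i. i < length b}"
    define R where "R = glue_rel K H P"
    define G where "G = glue K H P"
    define fK where "fK = glK K H P"
    define fH where "fH = glH K H P"
    have wK: "wf_graph K" "set a \<subseteq> V K" "set b \<subseteq> V K" using C_of_wf[OF X'] by auto
    have wH: "wf_graph H" "set c \<subseteq> V H" "set d \<subseteq> V H" using C_of_wf[OF Y'] by auto
    have Psub: "P \<subseteq> V K \<times> V H" unfolding P_def using wK wH lbc by (auto simp: nth_mem subsetD)
    have eqR: "equiv (V (dunion K H)) R" unfolding R_def by (rule glue_rel_equiv[OF Psub])
    have K0: "(K, [], []) \<in> C_of F" using gf_one[OF C_of_el[OF X']] wK by (simp add: C_of_mem)
    have H0: "(H, [], []) \<in> C_of F" using gf_one[OF C_of_el[OF Y']] wH by (simp add: C_of_mem)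
    have A: "(dunion K H, map inlv a, map inlv b) \<in> C_of F" using union_dunion[OF X' H0] by simp
    have B: "(dunion K H, map inrv c, map inrv d) \<in> C_of F" using union_dunion[OF K0 Y'] by simp
    have A': "(G, map fK a, map fK b) \<in> C_of F"
      using C_of_quot[OF ez A eqR] by (simp add: G_def glue_def fK_def glK_def R_def)
    have B': "(G, map fH c, map fH d) \<in> C_of F"
      using C_of_quot[OF ez B eqR] by (simp add: G_def glue_def fH_def glH_def R_def)
    have bc: "map fK b = map fH c"
    proof (rule nth_equalityI)
      show "length (map fK b) = length (map fH c)" using lbc by simp
      fix i assume "i < length (map fK b)"
      then have "(b ! i, c ! i) \<in> P" unfolding P_def by auto
      then show "map fK b ! i = map fH c ! i" using \<open>i < length (map fK b)\<close> lbc
        glue_same[OF Psub _ wK(1) wH(1)] by (simp add: fK_def fH_def)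
    qed
    from gf_mul[OF C_of_el[OF A'] C_of_el[OF B']]
    have "(G, red (rev (map fK a) @ map fK b @ rev (map fK b) @ map fH d)) \<in> F" using bc by simp
    moreover have "red (rev (map fK a) @ map fK b @ rev (map fK b) @ map fH d) = red (rev (map fK a) @ map fH d)"
      using red_cancel_word[of "rev (map fK a)" "map fK b" "map fH d"] by simp
    ultimately have el: "(G, red (rev (map fK a) @ map fH d)) \<in> F" by simp
    have wG: "wf_graph G" unfolding G_def by (rule wf_glue[OF wK(1) wH(1)])
    have sets: "set (map fK a) \<subseteq> V G" "set (map fH d) \<subseteq> V G"
      using wK wH glK_in[where K=K and H=H and f=P] glH_in[where K=K and H=H and f=P] unfolding G_def fK_def fH_def by auto
    have "bcomp (H, c, d) (K, a, b) \<in> C_of F"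
      using el wG sets by (simp add: C_of_mem G_def fK_def fH_def P_def[symmetric] Let_def)
    then show "bcomp Y X \<in> C_of F" using Xe Ye by simp
  qed
  show ?thesis unfolding group_theoretical_def
  proof (intro conjI gc allI impI)
    fix K a b R assume "(K, a, b) \<in> C_of F" "equiv (V K) R"
    then show "bquot R (K, a, b) \<in> C_of F" using C_of_quot[OF ez] by simp
  qed
qed

end


theorem theorem2p13:
  shows "(\<forall>F. graph_fibration F \<longrightarrow>
            C_of F = {(K, a, b). wf_bgraph (K, a, b) \<and> (K, gmul (gw b) (ginv (gw a))) \<in> F}
          \<and> skew_graph_category (C_of F))
   \<and> (\<forall>C. skew_graph_category C \<longrightarrow>
            F_of C = {(K, gmul (gw b) (ginv (gw a))) | K a b. (K, a, b) \<in> C}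
          \<and> F_of C = {(K, gw a) | K a. (K, [], a) \<in> C}
          \<and> graph_fibration (F_of C))
   \<and> (\<forall>F. graph_fibration F \<longrightarrow> F_of (C_of F) = F)
   \<and> (\<forall>C. skew_graph_category C \<longrightarrow> C_of (F_of C) = C)
   \<and> (\<forall>F. graph_fibration F \<longrightarrow> (easy_fibration F \<longleftrightarrow> group_theoretical (C_of F)))"
proof (intro conjI allI impI)
  fix F assume gf: "graph_fibration F"
  show "C_of F = {(K, a, b). wf_bgraph (K, a, b) \<and> (K, gmul (gw b) (ginv (gw a))) \<in> F}"
    by (rule C_of_alt[OF gf])
  show "skew_graph_category (C_of F)" by (rule skew_C_of[OF gf])
  show "F_of (C_of F) = F" by (rule F_of_C_of[OF gf])
  show "easy_fibration F \<longleftrightarrow> group_theoretical (C_of F)"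
    using gt_easy[OF gf] easy_gt[OF gf] by blast
next
  fix C assume sk: "skew_graph_category C"
  show "F_of C = {(K, gmul (gw b) (ginv (gw a))) | K a b. (K, a, b) \<in> C}"
    by (rule F_of_second[OF sk, symmetric])
  show "F_of C = {(K, gw a) | K a. (K, [], a) \<in> C}" by (rule F_of_third[OF sk])
  show "graph_fibration (F_of C)" by (rule fib_F_of[OF sk])
  show "C_of (F_of C) = C" by (rule C_of_F_of[OF sk])
qed

end
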